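(* Assume that for every time index $k \ge 0$ there exists $B_k < \infty$ such that $w_k(x_{0:k}) \le B_k$ for all $x_{0:k} \in \mathcal{S}_k$. Then for any $k>0$, the Markov kernel $$K_k^{draw}(x_{0:k}, dx_{0:k}') = \alpha_k(x_{0:k},x_{0:k}')\,(\widehat{\pi}_{k-1}^{(N_p)}\times q_k)(dx_{0:k}') + \Big(1 - \int_{E_k}\alpha_k(x_{0:k},y_{0:k})\,(\widehat{\pi}_{k-1}^{(N_p)}\times q_k)(dy_{0:k})\Big)\delta_{x_{0:k}}(dx_{0:k}'),$$ with $\alpha_k(x_{0:k},x_{0:k}') = \min\big(1, w_k(x_{0:k}')/w_k(x_{0:k})\big)$, is uniformly ergodic with invariant distribution $$\breve{\pi}_k^{(N_p)}(dx_{0:k}) = \frac{\pi_{k/k-1}(x_{0:k-1})\,(\widehat{\pi}_{k-1}^{(N_p)}\times\overline{\pi}_k)(dx_{0:k})}{\widehat{\pi}_{k-1}^{(N_p)}(\pi_{k/k-1})}.$$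
   Context: Let $(E,\mathcal{F})$ be a measurable space and $E_k = E^{k+1}$ with product $\sigma$-algebra; densities are with respect to a fixed reference measure. A hidden Markov model has initial density $p(x_0)$, transition densities $p(x_l\mid x_{l-1})$ and likelihoods $p(z_l\mid x_l)$ for fixed observations $z_1,z_2,\dots$. Let $\gamma_k(x_{0:k}) = p(x_0)\prod_{l=1}^k p(x_l\mid x_{l-1})p(z_l\mid x_l)$, $Z_k = \int\gamma_k\in(0,\infty)$, $\pi_k = \gamma_k/Z_k$, $\mathcal{S}_k = \{x_{0:k}:\pi_k(x_{0:k})>0\}$. For a measure $\mu$ and function $f$, $\mu(f)=\int f\,d\mu$. Proposals: $q_0$ a probability density on $E$; for $k>0$, $q_k(x_{0:k-1},x_k)$ a probability density in $x_k$ given $x_{0:k-1}$; for a probability measure $\mu$ on $E_{k-1}$, $(\mu\times q_k)(dx_{0:k}) = \mu(dx_{0:k-1})q_k(x_{0:k-1},dx_k)$. Weights: $w_0=\gamma_0/q_0$, $w_k(x_{0:k}) = \gamma_k(x_{0:k})/(\gamma_{k-1}(x_{0:k-1})q_k(x_{0:k-1},x_k))$. Further, with $\pi_k(x_{0:k-1}) = \int_E \pi_k(x_{0:k})\,dx_k$, define $\overline{\pi}_k(x_{0:k-1},x_k) = \pi_k(x_{0:k})/\pi_k(x_{0:k-1}) = p(x_k\mid x_{k-1},z_k)$ and $\pi_{k/k-1}(x_{0:k-1}) = \pi_k(x_{0:k-1})/\pi_{k-1}(x_{0:k-1})$ (proportional to $p(z_k\mid x_{k-1})$). Here $\widehat{\pi}_{k-1}^{(N_p)}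 = \frac{1}{N_p}\sum_{i=1}^{N_p}\delta_{x_{0:k-1}^i}$ is the empirical measure of the $N_p$ samples produced at time $k-1$ by the sequential MCMC algorithm: at time $0$ a Markov chain with kernel $K_0^{draw}$ (propose from $q_0$, accept with probability $\min(1,w_0(x')/w_0(x))$) started in $\mathcal{S}_0$; at each time $l>0$ a Markov chain started in $\mathcal{S}_l$ whose iterations apply $K_l^{draw}$ (defined as in the claim with $l$ in place of $k$) followed by a refinement Markov kernel leaving $\breve{\pi}_l^{(N_p)}$ invariant. *)

theory Defs
  imports "HOL-Probability.Probability"
begin

text \<open>Paths x_{0:k} are elements of E_k = E^{k+1}, represented as extensional
  functions on the index set {..k}, i.e. points of the product measurable space below.\<close>

definition Ek :: "'a measure \<Rightarrow> nat \<Rightarrow> (nat \<Rightarrow> 'a) measure" where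
  "Ek M k = PiM {..k} (\<lambda>_. M)"

text \<open>gamma_k(x_{0:k}) = p(x_0) prod_{l=1}^k p(x_l | x_{l-1}) p(z_l | x_l);
  here tr u v = p(x_l = v | x_{l-1} = u), lik l v = p(z_l | x_l = v).\<close>
definition hmm_gamma :: "('a \<Rightarrow> real) \<Rightarrow> ('a \<Rightarrow> 'a \<Rightarrow> real) \<Rightarrow> (nat \<Rightarrow> 'a \<Rightarrow> real)
    \<Rightarrow> nat \<Rightarrow> (nat \<Rightarrow> 'a) \<Rightarrow> real" where
  "hmm_gamma p0 tr lik k x = p0 (x 0) * (\<Prod>l\<in>{1..k}. tr (x (l - 1)) (x l) * lik l (x l))"

definition hmm_Z :: "'a measure \<Rightarrow> ('a \<Rightarrow> real) \<Rightarrow> ('a \<Rightarrow> 'a \<Rightarrow> real) \<Rightarrow> (nat \<Rightarrow> 'a \<Rightarrow> real)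
    \<Rightarrow> nat \<Rightarrow> real" where
  "hmm_Z M p0 tr lik k = (\<integral>x. hmm_gamma p0 tr lik k x \<partial>Ek M k)"

definition hmm_post :: "'a measure \<Rightarrow> ('a \<Rightarrow> real) \<Rightarrow> ('a \<Rightarrow> 'a \<Rightarrow> real) \<Rightarrow> (nat \<Rightarrow> 'a \<Rightarrow> real)
    \<Rightarrow> nat \<Rightarrow> (nat \<Rightarrow> 'a) \<Rightarrow> real" where
  "hmm_post M p0 tr lik k x = hmm_gamma p0 tr lik k x / hmm_Z M p0 tr lik k"

definition hmm_supp :: "'a measure \<Rightarrow> ('a \<Rightarrow> real) \<Rightarrow> ('a \<Rightarrow> 'a \<Rightarrow> real) \<Rightarrow> (nat \<Rightarrow> 'a \<Rightarrow> real)
    \<Rightarrow> nat \<Rightarrow> (nat \<Rightarrow> 'a) set" where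
  "hmm_supp M p0 tr lik k = {x \<in> space (Ek M k). hmm_post M p0 tr lik k x > 0}"

definition hmm_marg :: "'a measure \<Rightarrow> ('a \<Rightarrow> real) \<Rightarrow> ('a \<Rightarrow> 'a \<Rightarrow> real) \<Rightarrow> (nat \<Rightarrow> 'a \<Rightarrow> real)
    \<Rightarrow> nat \<Rightarrow> (nat \<Rightarrow> 'a) \<Rightarrow> real" where
  "hmm_marg M p0 tr lik k y = (\<integral>a. hmm_post M p0 tr lik k (y(k := a)) \<partial>M)"

definition hmm_cond :: "'a measure \<Rightarrow> ('a \<Rightarrow> real) \<Rightarrow> ('a \<Rightarrow> 'a \<Rightarrow> real) \<Rightarrow> (nat \<Rightarrow> 'a \<Rightarrow> real)
    \<Rightarrow> nat \<Rightarrow> (nat \<Rightarrow> 'a) \<Rightarrow> 'a \<Rightarrow> real" where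
  "hmm_cond M p0 tr lik k y a = hmm_post M p0 tr lik k (y(k := a)) / hmm_marg M p0 tr lik k y"

definition hmm_pred :: "'a measure \<Rightarrow> ('a \<Rightarrow> real) \<Rightarrow> ('a \<Rightarrow> 'a \<Rightarrow> real) \<Rightarrow> (nat \<Rightarrow> 'a \<Rightarrow> real)
    \<Rightarrow> nat \<Rightarrow> (nat \<Rightarrow> 'a) \<Rightarrow> real" where
  "hmm_pred M p0 tr lik k y = hmm_marg M p0 tr lik k y / hmm_post M p0 tr lik (k - 1) y"

text \<open>Importance weights w_k, valued in ennreal so that c/0 = infinity for c > 0
  (the mathematical convention; a real-valued division would give 0).
  q0 is the initial proposal density; q k y a = q_k(x_{0:k-1} = y, x_k = a).\<close>
definition smc_weight :: "('a \<Rightarrow> real) \<Rightarrow> ('a \<Rightarrow> 'a \<Rightarrow> real) \<Rightarrow> (nat \<Rightarrow> 'a \<Rightarrow> real)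
    \<Rightarrow> ('a \<Rightarrow> real) \<Rightarrow> (nat \<Rightarrow> (nat \<Rightarrow> 'a) \<Rightarrow> 'a \<Rightarrow> real) \<Rightarrow> nat \<Rightarrow> (nat \<Rightarrow> 'a) \<Rightarrow> ennreal" where
  "smc_weight p0 tr lik q0 q k x =
     (if k = 0 then ennreal (hmm_gamma p0 tr lik 0 x) / ennreal (q0 (x 0))
      else ennreal (hmm_gamma p0 tr lik k x) /
           ennreal (hmm_gamma p0 tr lik (k - 1) (restrict x {..<k}) * q k (restrict x {..<k}) (x k)))"

definition emp_measure :: "'b measure \<Rightarrow> nat \<Rightarrow> (nat \<Rightarrow> 'b) \<Rightarrow> 'b measure" where
  "emp_measure S N xs = measure_of (space S) (sets S)
     (\<lambda>A. (\<Sum>i<N. indicator A (xs i)) / of_nat N)"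

definition ext_prod :: "'a measure \<Rightarrow> nat \<Rightarrow> (nat \<Rightarrow> 'a) measure
    \<Rightarrow> ((nat \<Rightarrow> 'a) \<Rightarrow> 'a \<Rightarrow> real) \<Rightarrow> (nat \<Rightarrow> 'a) measure" where
  "ext_prod M k \<mu> p = measure_of (space (Ek M k)) (sets (Ek M k))
     (\<lambda>A. \<integral>\<^sup>+y. \<integral>\<^sup>+a. ennreal (p y a) * indicator A (y(k := a)) \<partial>M \<partial>\<mu>)"

definition mh_accept :: "('b \<Rightarrow> ennreal) \<Rightarrow> 'b \<Rightarrow> 'b \<Rightarrow> ennreal" where
  "mh_accept w x y = min 1 (w y / w x)"

definition imh_kernel :: "'b measure \<Rightarrow> 'b measure \<Rightarrow> ('b \<Rightarrow> ennreal) \<Rightarrow> 'b \<Rightarrow> 'b measure" where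
  "imh_kernel S \<nu> w x = measure_of (space S) (sets S)
     (\<lambda>A. (\<integral>\<^sup>+y. mh_accept w x y * indicator A y \<partial>\<nu>)
          + (1 - (\<integral>\<^sup>+y. mh_accept w x y \<partial>\<nu>)) * indicator A x)"

fun kpow :: "'b measure \<Rightarrow> ('b \<Rightarrow> 'b measure) \<Rightarrow> nat \<Rightarrow> 'b \<Rightarrow> 'b measure" where
  "kpow S K 0 x = return S x"
| "kpow S K (Suc n) x = bind (kpow S K n x) K"

definition tv_dist :: "'b measure \<Rightarrow> 'b measure \<Rightarrow> real" where
  "tv_dist P Q = (SUP A\<in>sets P. \<bar>measure P A - measure Q A\<bar>)"

definition uniformly_ergodic :: "'b measure \<Rightarrow> 'b set \<Rightarrow> ('b \<Rightarrow> 'b measure) \<Rightarrow> 'b measure \<Rightarrow> bool" where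
  "uniformly_ergodic S X K \<pi> \<longleftrightarrow> (\<lambda>n. SUP x\<in>X. tv_dist (kpow S K n x) \<pi>) \<longlonglongrightarrow> 0"

end

theory Submission
  imports Defs
begin


lemma ennreal_mult_min: "(a::ennreal) * min b c = min (a*b) (a*c)"
  by (cases "b \<le> c") (simp_all add: min_absorb1 min_absorb2 mult_left_mono)

lemma prob_emeasure_eq: "prob_space P \<Longrightarrow> emeasure P A = ennreal (measure P A)"
  by (simp add: prob_space_def finite_measure.emeasure_eq_measure)

locale imh =
  fixes S :: "'b measure" and \<nu> :: "'b measure" and w :: "'b \<Rightarrow> ennreal" and B c :: real
  assumes nu_prob: "prob_space \<nu>" and sets_nu: "sets \<nu> = sets S"
   and w_meas: "w \<in> borel_measurable S"
   and w_le: "\<forall>x\<in>space S. w x \<le> ennreal B"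
   and B_pos: "B > 0" and c_pos: "c > 0"
   and pi_prob: "prob_space (density \<nu> (\<lambda>x. ennreal c * w x))"
begin

lemma space_nu: "space \<nu> = space S"
  using sets_nu by (rule sets_eq_imp_space_eq)

lemma alpha_le1: "mh_accept w x y \<le> 1"
  by (simp add: mh_accept_def)

lemma alpha_meas[measurable]: "(\<lambda>(x,y). mh_accept w x y) \<in> borel_measurable (S \<Otimes>\<^sub>M S)"
  unfolding mh_accept_def using w_meas by measurable

lemma s_le1: "(\<integral>\<^sup>+y. mh_accept w x y \<partial>\<nu>) \<le> 1"
proof -
  have "(\<integral>\<^sup>+y. mh_accept w x y \<partial>\<nu>) \<le> (\<integral>\<^sup>+y. 1 \<partial>\<nu>)"
    by (intro nn_integral_mono alpha_le1)
  also have "\<dots> = 1" using nu_prob by (simp add: prob_space.emeasure_space_1)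
  finally show ?thesis .
qed

lemma alpha_meas2[measurable]: "x \<in> space S \<Longrightarrow> mh_accept w x \<in> borel_measurable \<nu>"
  using w_meas unfolding mh_accept_def by (simp add: measurable_cong_sets[OF sets_nu refl]) 

lemma K_emeasure:
  assumes x: "x \<in> space S" and A: "A \<in> sets S"
  shows "emeasure (imh_kernel S \<nu> w x) A =
     (\<integral>\<^sup>+y. mh_accept w x y * indicator A y \<partial>\<nu>) + (1 - (\<integral>\<^sup>+y. mh_accept w x y \<partial>\<nu>)) * indicator A x"
  unfolding imh_kernel_def
proof (rule emeasure_measure_of_sigma)
  show "sigma_algebra (space S) (sets S)" by (rule sets.sigma_algebra_axioms)
  show "positive (sets S) (\<lambda>A. (\<integral>\<^sup>+y. mh_accept w x y * indicator A y \<partial>\<nu>) + (1 - (\<integral>\<^sup>+y. mh_accept w x y \<partial>\<nu>)) * indicator A x)"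
    by (simp add: positive_def)
  show "countably_additive (sets S) (\<lambda>A. (\<integral>\<^sup>+y. mh_accept w x y * indicator A y \<partial>\<nu>) + (1 - (\<integral>\<^sup>+y. mh_accept w x y \<partial>\<nu>)) * indicator A x)"
  proof (rule countably_additiveI)
    fix F :: "nat \<Rightarrow> 'b set" assume F: "range F \<subseteq> sets S" "disjoint_family F"
    have m: "(\<lambda>y. mh_accept w x y * indicator (F i) y) \<in> borel_measurable \<nu>" for i
      using F x by (auto simp: measurable_cong_sets[OF sets_nu refl])
    have "(\<Sum>i. (\<integral>\<^sup>+y. mh_accept w x y * indicator (F i) y \<partial>\<nu>) + (1 - (\<integral>\<^sup>+y. mh_accept w x y \<partial>\<nu>)) * indicator (F i) x)
       = (\<Sum>i. (\<integral>\<^sup>+y. mh_accept w x y * indicator (F i) y \<partial>\<nu>)) + (\<Sum>i. (1 - (\<integral>\<^sup>+y. mh_accept w x y \<partial>\<nu>)) * indicator (F i) x)"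
      by (rule suminf_add[OF summableI summableI, symmetric])
    also have "(\<Sum>i. (\<integral>\<^sup>+y. mh_accept w x y * indicator (F i) y \<partial>\<nu>)) = (\<integral>\<^sup>+y. (\<Sum>i. mh_accept w x y * indicator (F i) y) \<partial>\<nu>)"
      by (rule nn_integral_suminf[symmetric]) (use m in auto)
    also have "\<dots> = (\<integral>\<^sup>+y. mh_accept w x y * indicator (\<Union>i. F i) y \<partial>\<nu>)"
      by (intro nn_integral_cong) (simp only: ennreal_suminf_cmult suminf_indicator[OF F(2)])
    also have "(\<Sum>i. (1 - (\<integral>\<^sup>+y. mh_accept w x y \<partial>\<nu>)) * indicator (F i) x) = (1 - (\<integral>\<^sup>+y. mh_accept w x y \<partial>\<nu>)) * indicator (\<Union>i. F i) x"
      by (simp only: ennreal_suminf_cmult suminf_indicator[OF F(2)])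
    finally show "(\<Sum>i. (\<integral>\<^sup>+y. mh_accept w x y * indicator (F i) y \<partial>\<nu>) + (1 - (\<integral>\<^sup>+y. mh_accept w x y \<partial>\<nu>)) * indicator (F i) x)
       = (\<integral>\<^sup>+y. mh_accept w x y * indicator (\<Union>i. F i) y \<partial>\<nu>) + (1 - (\<integral>\<^sup>+y. mh_accept w x y \<partial>\<nu>)) * indicator (\<Union>i. F i) x" .
  qed
qed (fact A)

lemma sets_K[simp]: "sets (imh_kernel S \<nu> w x) = sets S"
  unfolding imh_kernel_def by (simp add: sets.sets_measure_of_eq)

lemma space_K[simp]: "space (imh_kernel S \<nu> w x) = space S"
  unfolding imh_kernel_def by (simp add: space_measure_of_conv)

lemma K_prob: assumes x: "x \<in> space S" shows "prob_space (imh_kernel S \<nu> w x)"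
proof
  have "emeasure (imh_kernel S \<nu> w x) (space S) = (\<integral>\<^sup>+y. mh_accept w x y \<partial>\<nu>) + (1 - (\<integral>\<^sup>+y. mh_accept w x y \<partial>\<nu>))"
  proof -
    have "(\<integral>\<^sup>+y. mh_accept w x y * indicator (space S) y \<partial>\<nu>) = (\<integral>\<^sup>+y. mh_accept w x y \<partial>\<nu>)"
      by (rule nn_integral_cong) (simp add: space_nu)
    then show ?thesis using K_emeasure[OF x sets.top] x by simp
  qed
  also have "\<dots> = 1" using s_le1[of x] by (rule add_diff_inverse_ennreal)
  finally show "emeasure (imh_kernel S \<nu> w x) (space (imh_kernel S \<nu> w x)) = 1" by simp
qed


lemma nu_sf: "sigma_finite_measure \<nu>"
  using nu_prob by (simp add: prob_space_imp_sigma_finite)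

lemma pair_sets: "sets (S \<Otimes>\<^sub>M \<nu>) = sets (S \<Otimes>\<^sub>M S)"
  by (rule sets_pair_measure_cong[OF refl sets_nu])

lemma pair_sets2: "sets (\<nu> \<Otimes>\<^sub>M \<nu>) = sets (S \<Otimes>\<^sub>M S)"
  by (rule sets_pair_measure_cong[OF sets_nu sets_nu])

lemma I_meas: assumes A: "A \<in> sets S"
  shows "(\<lambda>x. \<integral>\<^sup>+y. mh_accept w x y * indicator A y \<partial>\<nu>) \<in> borel_measurable S"
proof -
  have "(\<lambda>(x,y). mh_accept w x y * indicator A y) \<in> borel_measurable (S \<Otimes>\<^sub>M S)"
    using A by measurable
  then have "(\<lambda>(x,y). mh_accept w x y * indicator A y) \<in> borel_measurable (S \<Otimes>\<^sub>M \<nu>)"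
    by (simp add: measurable_cong_sets[OF pair_sets refl])
  then show ?thesis
    using sigma_finite_measure.borel_measurable_nn_integral[OF nu_sf, of "\<lambda>x y. mh_accept w x y * indicator A y" S]
    by simp
qed

lemma s_meas: "(\<lambda>x. \<integral>\<^sup>+y. mh_accept w x y \<partial>\<nu>) \<in> borel_measurable S"
proof -
  have "(\<lambda>(x,y). mh_accept w x y) \<in> borel_measurable (S \<Otimes>\<^sub>M \<nu>)"
    by (simp add: measurable_cong_sets[OF pair_sets refl])
  then show ?thesis
    using sigma_finite_measure.borel_measurable_nn_integral[OF nu_sf, of "\<lambda>x y. mh_accept w x y" S]
    by simp
qed

lemma Kx_meas: assumes A: "A \<in> sets S"
  shows "(\<lambda>x. emeasure (imh_kernel S \<nu> w x) A) \<in> borel_measurable S"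
proof -
  have "(\<lambda>x. (\<integral>\<^sup>+y. mh_accept w x y * indicator A y \<partial>\<nu>) + (1 - (\<integral>\<^sup>+y. mh_accept w x y \<partial>\<nu>)) * indicator A x) \<in> borel_measurable S"
    using I_meas[OF A] s_meas A by measurable
  then show ?thesis
    by (rule measurable_cong[THEN iffD1, rotated]) (simp add: K_emeasure A)
qed

lemma K_meas: "imh_kernel S \<nu> w \<in> S \<rightarrow>\<^sub>M prob_algebra S"
proof (rule measurable_prob_algebraI)
  show "prob_space (imh_kernel S \<nu> w x)" if "x \<in> space S" for x using K_prob[OF that] .
  show "imh_kernel S \<nu> w \<in> S \<rightarrow>\<^sub>M subprob_algebra S"
    by (rule measurable_subprob_algebra)
       (auto simp: Kx_meas K_prob prob_space_imp_subprob_space)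
qed

abbreviation "\<pi> \<equiv> density \<nu> (\<lambda>x. ennreal c * w x)"

lemma sets_pi[simp]: "sets \<pi> = sets S" by (simp add: sets_nu)
lemma space_pi[simp]: "space \<pi> = space S" by (simp add: space_nu)

lemma pi_in: "\<pi> \<in> space (prob_algebra S)"
  using pi_prob sets_nu by (simp add: space_prob_algebra)

lemma h_eq: assumes x: "x \<in> space S"
  shows "ennreal c * w x * mh_accept w x y = ennreal c * min (w x) (w y)"
proof -
  have fin: "w x \<noteq> top" using w_le x by (metis ennreal_neq_top neq_top_trans)
  have "w x * min 1 (w y / w x) = min (w x) (w y)"
  proof (cases "w x = 0")
    case True then show ?thesis by simp
  next
    case False
    have "w x * (w y / w x) = w y"
      using False fin by (metis ennreal_mult_divide_eq ennreal_times_divide mult.commute)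
    moreover have "w x * min 1 (w y / w x) = min (w x * 1) (w x * (w y / w x))"
      by (rule ennreal_mult_min)
    ultimately show ?thesis by simp
  qed
  then show ?thesis by (simp add: mh_accept_def mult.assoc)
qed

lemma w_meas_nu[measurable]: "w \<in> borel_measurable \<nu>"
  using w_meas by (simp add: measurable_cong_sets[OF sets_nu refl])

lemma invariant: "bind \<pi> (imh_kernel S \<nu> w) = \<pi>"
proof (rule measure_eqI)
  show "sets (bind \<pi> (imh_kernel S \<nu> w)) = sets \<pi>"
    using sets_bind'[OF pi_in K_meas] sets_nu by simp
  fix A assume "A \<in> sets (bind \<pi> (imh_kernel S \<nu> w))"
  then have A: "A \<in> sets S" using sets_bind'[OF pi_in K_meas] by simp
  define f where "f x = ennreal c * w x" for x
  define s where "s x = (\<integral>\<^sup>+y. mh_accept w x y \<partial>\<nu>)" for x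
  define I where "I x = (\<integral>\<^sup>+y. mh_accept w x y * indicator A y \<partial>\<nu>)" for x
  have fm[measurable]: "f \<in> borel_measurable \<nu>" unfolding f_def by measurable
  have sm[measurable]: "s \<in> borel_measurable \<nu>" unfolding s_def
    using s_meas by (simp add: measurable_cong_sets[OF sets_nu refl])
  have Im[measurable]: "I \<in> borel_measurable \<nu>" unfolding I_def
    using I_meas[OF A] by (simp add: measurable_cong_sets[OF sets_nu refl])
  have Am[measurable]: "A \<in> sets \<nu>" using A sets_nu by simp
  have Kmeas: "(\<lambda>x. emeasure (imh_kernel S \<nu> w x) A) \<in> borel_measurable \<nu>"
    using Kx_meas[OF A] by (simp add: measurable_cong_sets[OF sets_nu refl])
  have lhs: "emeasure (bind \<pi> (imh_kernel S \<nu> w)) A = (\<integral>\<^sup>+x. f x * (I x + (1 - s x) * indicator A x) \<partial>\<nu>)"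
  proof -
    have "emeasure (bind \<pi> (imh_kernel S \<nu> w)) A = (\<integral>\<^sup>+x. emeasure (imh_kernel S \<nu> w x) A \<partial>\<pi>)"
      by (rule emeasure_bind_prob_algebra[OF pi_in K_meas A])
    also have "\<dots> = (\<integral>\<^sup>+x. f x * emeasure (imh_kernel S \<nu> w x) A \<partial>\<nu>)"
      unfolding f_def by (rule nn_integral_density) (use Kmeas in auto)
    also have "\<dots> = (\<integral>\<^sup>+x. f x * (I x + (1 - s x) * indicator A x) \<partial>\<nu>)"
      by (rule nn_integral_cong) (simp add: K_emeasure A space_nu I_def s_def)
    finally show ?thesis .
  qed
  have piA: "emeasure \<pi> A = (\<integral>\<^sup>+x. f x * indicator A x \<partial>\<nu>)"
    using Am by (simp add: emeasure_density f_def)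
  have sum: "(\<integral>\<^sup>+x. f x * (I x + (1 - s x) * indicator A x) \<partial>\<nu>) + (\<integral>\<^sup>+x. f x * s x * indicator A x \<partial>\<nu>)
      = (\<integral>\<^sup>+x. f x * I x \<partial>\<nu>) + (\<integral>\<^sup>+x. f x * indicator A x \<partial>\<nu>)"
  proof -
    have "(\<integral>\<^sup>+x. f x * (I x + (1 - s x) * indicator A x) \<partial>\<nu>) + (\<integral>\<^sup>+x. f x * s x * indicator A x \<partial>\<nu>)
      = (\<integral>\<^sup>+x. f x * (I x + (1 - s x) * indicator A x) + f x * s x * indicator A x \<partial>\<nu>)"
      by (rule nn_integral_add[symmetric]) auto
    also have "\<dots> = (\<integral>\<^sup>+x. f x * I x + f x * indicator A x \<partial>\<nu>)"
    proof (rule nn_integral_cong)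
      fix x
      have "(1 - s x) + s x = 1" unfolding s_def using s_le1 by (simp add: diff_add_cancel_ennreal)
      then show "f x * (I x + (1 - s x) * indicator A x) + f x * s x * indicator A x = f x * I x + f x * indicator A x"
      proof -
        have "f x * (I x + (1 - s x) * indicator A x) + f x * s x * indicator A x
           = f x * I x + f x * ((1 - s x) + s x) * indicator A x" by (simp add: algebra_simps)
        then show ?thesis using \<open>(1 - s x) + s x = 1\<close> by simp
      qed
    qed
    also have "\<dots> = (\<integral>\<^sup>+x. f x * I x \<partial>\<nu>) + (\<integral>\<^sup>+x. f x * indicator A x \<partial>\<nu>)"
      by (rule nn_integral_add) auto
    finally show ?thesis .
  qed
  have sym: "(\<integral>\<^sup>+x. f x * s x * indicator A x \<partial>\<nu>) = (\<integral>\<^sup>+x. f x * I x \<partial>\<nu>)"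
  proof -
    define h where "h x y = ennreal c * min (w x) (w y)" for x y
    have hm: "(\<lambda>(x,y). h x y * indicator A x) \<in> borel_measurable (\<nu> \<Otimes>\<^sub>M \<nu>)"
    proof -
      have "(\<lambda>(x,y). h x y * indicator A x) \<in> borel_measurable (S \<Otimes>\<^sub>M S)"
        unfolding h_def using A w_meas by measurable
      then show ?thesis by (simp add: measurable_cong_sets[OF pair_sets2 refl])
    qed
    have "(\<integral>\<^sup>+x. f x * s x * indicator A x \<partial>\<nu>) = (\<integral>\<^sup>+x. \<integral>\<^sup>+y. h x y * indicator A x \<partial>\<nu> \<partial>\<nu>)"
    proof (rule nn_integral_cong)
      fix x assume x: "x \<in> space \<nu>"
      have "f x * s x * indicator A x = (\<integral>\<^sup>+y. f x * mh_accept w x y * indicator A x \<partial>\<nu>)"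
      proof -
        have m: "mh_accept w x \<in> borel_measurable \<nu>" using x alpha_meas2 space_nu by auto
        have "(\<integral>\<^sup>+y. f x * mh_accept w x y * indicator A x \<partial>\<nu>) = f x * (\<integral>\<^sup>+y. mh_accept w x y * indicator A x \<partial>\<nu>)"
          unfolding mult.assoc by (rule nn_integral_cmult) (use m in auto)
        also have "\<dots> = f x * ((\<integral>\<^sup>+y. mh_accept w x y \<partial>\<nu>) * indicator A x)"
          by (simp add: nn_integral_multc m)
        finally show ?thesis unfolding s_def by (simp add: mult.assoc)
      qed
      also have "\<dots> = (\<integral>\<^sup>+y. h x y * indicator A x \<partial>\<nu>)"
        using x by (simp add: h_eq space_nu f_def h_def)
      finally show "f x * s x * indicator A x = (\<integral>\<^sup>+y. h x y * indicator A x \<partial>\<nu>)" .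
    qed
    also have "\<dots> = (\<integral>\<^sup>+y. \<integral>\<^sup>+x. h x y * indicator A x \<partial>\<nu> \<partial>\<nu>)"
      using pair_sigma_finite.Fubini'[of \<nu> \<nu> "\<lambda>x y. h x y * indicator A x"] hm nu_sf
      by (simp add: pair_sigma_finite_def)
    also have "\<dots> = (\<integral>\<^sup>+x. f x * I x \<partial>\<nu>)"
    proof (rule nn_integral_cong)
      fix x assume x: "x \<in> space \<nu>"
      have "f x * I x = (\<integral>\<^sup>+y. f x * mh_accept w x y * indicator A y \<partial>\<nu>)"
      proof -
        have m: "mh_accept w x \<in> borel_measurable \<nu>" using x alpha_meas2 space_nu by auto
        show ?thesis unfolding I_def mult.assoc by (rule nn_integral_cmult[symmetric]) (use m Am in auto)
      qed
      also have "\<dots> = (\<integral>\<^sup>+y. h y x * indicator A y \<partial>\<nu>)"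
        using x by (simp add: h_eq space_nu f_def h_def min.commute)
      finally show "(\<integral>\<^sup>+y. h y x * indicator A y \<partial>\<nu>) = f x * I x" by simp
    qed
    finally show ?thesis .
  qed
  have fin: "(\<integral>\<^sup>+x. f x * I x \<partial>\<nu>) \<noteq> \<infinity>"
  proof -
    have "(\<integral>\<^sup>+x. f x * I x \<partial>\<nu>) \<le> (\<integral>\<^sup>+x. f x \<partial>\<nu>)"
    proof (rule nn_integral_mono)
      fix x have "I x \<le> 1"
      proof -
        have "I x \<le> (\<integral>\<^sup>+y. mh_accept w x y \<partial>\<nu>)"
          unfolding I_def by (rule nn_integral_mono) (simp add: indicator_def)
        then show ?thesis using s_le1[of x] by (rule order_trans)
      qed
      then show "f x * I x \<le> f x" by (metis mult.right_neutral mult_left_mono zero_le)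
    qed
    also have "\<dots> = (\<integral>\<^sup>+x. f x * indicator (space \<nu>) x \<partial>\<nu>)"
      by (rule nn_integral_cong) simp
    also have "\<dots> = emeasure \<pi> (space \<pi>)"
      by (simp add: emeasure_density f_def)
    also have "\<dots> = 1" using prob_space.emeasure_space_1[OF pi_prob] space_nu by simp
    finally show ?thesis by (auto simp: top_unique)
  qed
  show "emeasure (bind \<pi> (imh_kernel S \<nu> w)) A = emeasure \<pi> A"
  proof -
    have "(\<integral>\<^sup>+x. f x * I x \<partial>\<nu>) + emeasure (bind \<pi> (imh_kernel S \<nu> w)) A = (\<integral>\<^sup>+x. f x * I x \<partial>\<nu>) + emeasure \<pi> A"
      using sum unfolding lhs piA sym by (simp add: add.commute)
    then show ?thesis using fin by (simp add: ennreal_add_left_cancel)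
  qed
qed


lemma w_real: assumes "x \<in> space S" obtains r where "w x = ennreal r" "0 \<le> r" "r \<le> B"
proof -
  have le: "w x \<le> ennreal B" using w_le assms by auto
  then have "w x \<noteq> top" by (metis ennreal_neq_top neq_top_trans)
  then have eq: "w x = ennreal (enn2real (w x))" by (simp add: less_top)
  have "enn2real (w x) \<le> B" using le eq B_pos by (metis ennreal_le_iff less_imp_le)
  then show ?thesis using that eq by (metis enn2real_nonneg)
qed

lemma alpha_lower: assumes x: "x \<in> space S" and y: "y \<in> space S"
  shows "w y * ennreal (1/B) \<le> mh_accept w x y"
proof -
  obtain r where r: "w x = ennreal r" "0 \<le> r" "r \<le> B" using w_real[OF x] by blast
  obtain v where v: "w y = ennreal v" "0 \<le> v" "v \<le> B" using w_real[OF y] by blast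
  have wv: "w y * ennreal (1/B) = ennreal (v/B)"
    using v B_pos by (simp add: ennreal_mult''[symmetric])
  have vB: "v / B \<le> 1" using v B_pos by simp
  show ?thesis
  proof (cases "r = 0")
    case True
    show ?thesis
    proof (cases "v = 0")
      case True
      then have "w y * ennreal (1/B) = 0" using wv by simp
      then show ?thesis by (metis zero_le)
    next
      case False
      then have "mh_accept w x y = 1" using \<open>r = 0\<close> r v by (simp add: mh_accept_def)
      then show ?thesis using wv vB by (simp add: ennreal_le_1)
    qed
  next
    case False
    then have rpos: "r > 0" using r by simp
    have "mh_accept w x y = min 1 (ennreal (v / r))"
      using r v rpos by (simp add: mh_accept_def divide_ennreal)
    moreover have "v / B \<le> v / r" using rpos r v by (simp add: divide_left_mono)
    ultimately show ?thesis using wv vB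
      by (metis ennreal_le_1 ennreal_leI min.boundedI)
  qed
qed

lemma minor: assumes x: "x \<in> space S" and A: "A \<in> sets S"
  shows "ennreal (1/(c*B)) * emeasure \<pi> A \<le> emeasure (imh_kernel S \<nu> w x) A"
proof -
  have Am: "A \<in> sets \<nu>" using A sets_nu by simp
  have "ennreal (1/(c*B)) * emeasure \<pi> A = ennreal (1/(c*B)) * (\<integral>\<^sup>+y. ennreal c * w y * indicator A y \<partial>\<nu>)"
    using Am by (simp add: emeasure_density)
  also have "\<dots> = (\<integral>\<^sup>+y. ennreal (1/(c*B)) * (ennreal c * w y * indicator A y) \<partial>\<nu>)"
    by (rule nn_integral_cmult[symmetric]) (use Am in measurable)
  also have "\<dots> = (\<integral>\<^sup>+y. w y * ennreal (1/B) * indicator A y \<partial>\<nu>)"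
  proof (rule nn_integral_cong)
    fix y
    have "ennreal (1/(c*B)) * ennreal c = ennreal (1/B)"
      using c_pos B_pos by (simp add: ennreal_mult''[symmetric])
    then show "ennreal (1/(c*B)) * (ennreal c * w y * indicator A y) = w y * ennreal (1/B) * indicator A y"
      by (metis (no_types, lifting) mult.assoc mult.commute)
  qed
  also have "\<dots> \<le> (\<integral>\<^sup>+y. mh_accept w x y * indicator A y \<partial>\<nu>)"
    by (rule nn_integral_mono) (use alpha_lower[OF x] space_nu in \<open>auto intro: mult_right_mono\<close>)
  also have "\<dots> \<le> emeasure (imh_kernel S \<nu> w x) A"
    by (simp add: K_emeasure x A)
  finally show ?thesis .
qed

lemma kpow_in: assumes x: "x \<in> space S" shows "kpow S (imh_kernel S \<nu> w) n x \<in> space (prob_algebra S)"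
proof (induction n)
  case 0 then show ?case using x by (simp add: space_prob_algebra prob_space_return)
next
  case (Suc n) then show ?case
    using prob_space_bind'[OF Suc K_meas] sets_bind'[OF Suc K_meas] by (simp add: space_prob_algebra)
qed

lemma kpow_lower:
  fixes e :: real
  assumes e: "0 < e" "e \<le> 1"
    and mn: "\<And>x A. x \<in> space S \<Longrightarrow> A \<in> sets S \<Longrightarrow> ennreal e * emeasure \<pi> A \<le> emeasure (imh_kernel S \<nu> w x) A"
    and x: "x \<in> space S"
  shows "\<forall>A\<in>sets S. ennreal (1 - (1-e)^n) * emeasure \<pi> A \<le> emeasure (kpow S (imh_kernel S \<nu> w) n x) A"
proof (induction n)
  case 0 then show ?case by simp
next
  case (Suc n)
  let ?K = "imh_kernel S \<nu> w"
  define \<mu> where "\<mu> = kpow S ?K n x"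
  have \<mu>in: "\<mu> \<in> space (prob_algebra S)" unfolding \<mu>_def by (rule kpow_in[OF x])
  then have \<mu>p: "prob_space \<mu>" and \<mu>s: "sets \<mu> = sets S" by (auto simp: space_prob_algebra)
  have \<mu>sp: "space \<mu> = space S" using \<mu>s by (rule sets_eq_imp_space_eq)
  define a where "a = 1 - (1-e)^n"
  have a01: "0 \<le> a" "a \<le> 1" unfolding a_def using e by (auto simp: power_le_one)
  have IH: "\<forall>A\<in>sets S. ennreal a * emeasure \<pi> A \<le> emeasure \<mu> A" using Suc unfolding a_def \<mu>_def .
  have pip: "prob_space \<pi>" by (rule pi_prob)
  show ?case
  proof
    fix A assume A: "A \<in> sets S"
    define m where "m = measure \<pi> A"
    have m0: "0 \<le> m" unfolding m_def by simp
    have piA: "emeasure \<pi> A = ennreal m" unfolding m_def using pip by (simp add: prob_emeasure_eq)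
    define g where "g z = measure (?K z) A" for z
    have Kg: "emeasure (?K z) A = ennreal (g z)" if "z \<in> space S" for z
      unfolding g_def using K_prob[OF that] by (simp add: prob_emeasure_eq)
    have gl: "e * m \<le> g z" if "z \<in> space S" for z
    proof -
      have "ennreal (e*m) = ennreal e * ennreal m" using e by (simp add: ennreal_mult')
      then have "ennreal (e * m) \<le> ennreal (g z)" using mn[OF that A] Kg[OF that] piA by simp
      then show ?thesis by (simp add: ennreal_le_iff g_def)
    qed
    have gm: "g \<in> borel_measurable S" unfolding g_def
      using Kx_meas[OF A] by (simp add: measure_def) 
    define hf where "hf z = ennreal (g z - e * m)" for z
    have hfm: "hf \<in> borel_measurable S" unfolding hf_def using gm by measurable
    have split: "\<And>P. sets P = sets S \<Longrightarrow> prob_space P \<Longrightarrow> (\<integral>\<^sup>+z. emeasure (?K z) A \<partial>P) = ennreal (e*m) + (\<integral>\<^sup>+z. hf z \<partial>P)"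
    proof -
      fix P :: "'b measure" assume Ps: "sets P = sets S" and Pp: "prob_space P"
      have Psp: "space P = space S" using Ps by (rule sets_eq_imp_space_eq)
      have "(\<integral>\<^sup>+z. emeasure (?K z) A \<partial>P) = (\<integral>\<^sup>+z. ennreal (e*m) + hf z \<partial>P)"
      proof (rule nn_integral_cong)
        fix z assume "z \<in> space P"
        then have z: "z \<in> space S" using Psp by simp
        show "emeasure (?K z) A = ennreal (e*m) + hf z"
          using Kg[OF z] gl[OF z] e m0 unfolding hf_def by (simp add: ennreal_plus[symmetric])
      qed
      also have "\<dots> = (\<integral>\<^sup>+z. ennreal (e*m) \<partial>P) + (\<integral>\<^sup>+z. hf z \<partial>P)"
        by (rule nn_integral_add) (use hfm Ps in \<open>auto simp: measurable_cong_sets[OF Ps refl]\<close>)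
      also have "(\<integral>\<^sup>+z. ennreal (e*m) \<partial>P) = ennreal (e*m)"
        using Pp by (simp add: prob_space.emeasure_space_1)
      finally show "(\<integral>\<^sup>+z. emeasure (?K z) A \<partial>P) = ennreal (e*m) + (\<integral>\<^sup>+z. hf z \<partial>P)" .
    qed
    have hpi: "(\<integral>\<^sup>+z. hf z \<partial>\<pi>) = ennreal (m - e*m)"
    proof -
      have "ennreal m = emeasure (bind \<pi> ?K) A" using invariant piA by simp
      also have "\<dots> = (\<integral>\<^sup>+z. emeasure (?K z) A \<partial>\<pi>)"
        by (rule emeasure_bind_prob_algebra[OF pi_in K_meas A])
      also have "\<dots> = ennreal (e*m) + (\<integral>\<^sup>+z. hf z \<partial>\<pi>)" by (rule split) (auto simp: pip sets_nu)
      finally have 1: "ennreal m = ennreal (e*m) + (\<integral>\<^sup>+z. hf z \<partial>\<pi>)" .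
      have "ennreal m = ennreal (e*m) + ennreal (m - e*m)"
        using e m0 by (simp add: ennreal_plus[symmetric] mult_left_le_one_le)
      with 1 show ?thesis by (simp add: ennreal_add_left_cancel)
    qed
    have le: "scale_measure (ennreal a) \<pi> \<le> \<mu>"
    proof -
      have sp: "space (scale_measure (ennreal a) \<pi>) = space \<mu>" by (simp add: space_scale_measure \<mu>sp space_nu)
      have st: "sets (scale_measure (ennreal a) \<pi>) = sets \<mu>" by (simp add: \<mu>s sets_nu)
      have "emeasure (scale_measure (ennreal a) \<pi>) X \<le> emeasure \<mu> X" for X
      proof (cases "X \<in> sets S")
        case True then show ?thesis using IH by simp
      next
        case False then have "X \<notin> sets \<pi>" using sets_nu by simp
        then show ?thesis by (simp add: emeasure_notin_sets)
      qed
      then show ?thesis unfolding le_measure_iff using sp st by (simp add: le_fun_def)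
    qed
    have "ennreal a * (\<integral>\<^sup>+z. hf z \<partial>\<pi>) = (\<integral>\<^sup>+z. hf z \<partial>scale_measure (ennreal a) \<pi>)"
    proof -
      have hfpi: "hf \<in> borel_measurable \<pi>" using hfm unfolding measurable_cong_sets[OF sets_pi refl] .
      show ?thesis by (rule nn_integral_scale_measure[symmetric, OF hfpi])
    qed
    also have "\<dots> \<le> (\<integral>\<^sup>+z. hf z \<partial>\<mu>)"
      by (rule nn_integral_mono_measure[OF _ le]) (simp add: \<mu>s sets_nu)
    finally have h0: "ennreal a * (\<integral>\<^sup>+z. hf z \<partial>\<pi>) \<le> (\<integral>\<^sup>+z. hf z \<partial>\<mu>)" .
    have mle: "e*m \<le> m" using e m0 by (simp add: mult_left_le_one_le)
    have hmu: "ennreal (a * (m - e*m)) \<le> (\<integral>\<^sup>+z. hf z \<partial>\<mu>)"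
    proof -
      have "ennreal (a * (m - e*m)) = ennreal a * ennreal (m - e*m)"
        by (rule ennreal_mult) (use a01 mle in auto)
      then show ?thesis using h0 unfolding hpi by simp
    qed
    have nn: "0 \<le> a * (m - e*m)" using a01 mle by simp
    have em0: "0 \<le> e*m" using e m0 by simp
    have alg: "(1 - (1-e)^Suc n) * m = e*m + a * (m - e*m)" unfolding a_def power_Suc by algebra
    have "ennreal ((1 - (1-e)^Suc n) * m) = ennreal (e*m) + ennreal (a * (m - e*m))"
      unfolding alg by (rule ennreal_plus[OF em0 nn])
    also have "\<dots> \<le> ennreal (e*m) + (\<integral>\<^sup>+z. hf z \<partial>\<mu>)" using hmu by (rule add_left_mono)
    also have "\<dots> = (\<integral>\<^sup>+z. emeasure (?K z) A \<partial>\<mu>)" by (rule split[symmetric, OF \<mu>s \<mu>p])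
    also have "\<dots> = emeasure (bind \<mu> ?K) A"
      by (rule emeasure_bind_prob_algebra[OF \<mu>in K_meas A, symmetric])
    also have "bind \<mu> ?K = kpow S ?K (Suc n) x" unfolding \<mu>_def by simp
    finally have fin: "ennreal ((1 - (1-e)^Suc n) * m) \<le> emeasure (kpow S ?K (Suc n) x) A" .
    have "ennreal (1 - (1-e)^Suc n) * emeasure \<pi> A = ennreal ((1 - (1-e)^Suc n) * m)"
      by (simp only: piA ennreal_mult''[OF m0])
    with fin show "ennreal (1 - (1-e)^Suc n) * emeasure \<pi> A \<le> emeasure (kpow S ?K (Suc n) x) A" by simp
  qed
qed


lemma tv_bound:
  assumes Pp: "prob_space P" and Ps: "sets P = sets S" and a: "0 \<le> a" "a \<le> 1"
    and low: "\<forall>A\<in>sets S. ennreal a * emeasure \<pi> A \<le> emeasure P A"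
  shows "tv_dist P \<pi> \<le> 1 - a" "0 \<le> tv_dist P \<pi>"
proof -
  have pip: "prob_space \<pi>" by (rule pi_prob)
  have Psp: "space P = space S" using Ps by (rule sets_eq_imp_space_eq)
  have pisp: "space \<pi> = space S" using space_nu by simp
  have lowr: "a * measure \<pi> A \<le> measure P A" if A: "A \<in> sets S" for A
  proof -
    have "ennreal (a * measure \<pi> A) \<le> ennreal (measure P A)"
    proof -
      have "ennreal a * emeasure \<pi> A \<le> emeasure P A" using low A by blast
      then show ?thesis unfolding prob_emeasure_eq[OF pip, of A] prob_emeasure_eq[OF Pp, of A]
        ennreal_mult''[OF measure_nonneg] .
    qed
    then show ?thesis by (simp add: ennreal_le_iff)
  qed
  have pw: "\<bar>measure P A - measure \<pi> A\<bar> \<le> 1 - a" if A: "A \<in> sets S" for A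
  proof -
    have Ac: "space S - A \<in> sets S" using A by auto
    have l1: "a * measure \<pi> A \<le> measure P A" by (rule lowr[OF A])
    have l2: "a * measure \<pi> (space S - A) \<le> measure P (space S - A)" by (rule lowr[OF Ac])
    have cP: "measure P (space S - A) = 1 - measure P A"
      using prob_space.prob_compl[OF Pp, of A] A Ps Psp by simp
    have cpi: "measure \<pi> (space S - A) = 1 - measure \<pi> A"
      using prob_space.prob_compl[OF pip, of A] A pisp by (simp add: sets_nu)
    have l2': "a - a * measure \<pi> A \<le> 1 - measure P A"
      using l2 unfolding cP cpi by (simp add: right_diff_distrib)
    have m1: "measure \<pi> A \<le> 1" using prob_space.prob_le_1[OF pip] by simp
    have m0: "0 \<le> measure \<pi> A" by simp
    have h4: "0 \<le> measure \<pi> A - a * measure \<pi> A"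
      using a m0 m1 by (simp add: mult_left_le_one_le)
    have h5: "measure \<pi> A - a * measure \<pi> A \<le> 1 - a"
    proof -
      have "(1 - a) * measure \<pi> A \<le> (1 - a) * 1" using a m1 by (intro mult_left_mono) auto
      then show ?thesis by (simp add: left_diff_distrib)
    qed
    show ?thesis using l1 l2' h4 h5 by (simp add: abs_le_iff)
  qed
  have ne: "sets P \<noteq> {}" using sets.empty_sets[of P] by blast
  show "tv_dist P \<pi> \<le> 1 - a"
    unfolding tv_dist_def by (rule cSUP_least[OF ne]) (use pw Ps in auto)
  have bdd: "bdd_above ((\<lambda>A. \<bar>measure P A - measure \<pi> A\<bar>) ` sets P)"
    by (rule bdd_aboveI2[where M="1 - a"]) (use pw Ps in auto)
  show "0 \<le> tv_dist P \<pi>"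
    unfolding tv_dist_def by (rule cSUP_upper2[OF bdd sets.empty_sets]) simp
qed

lemma ergodic: assumes X: "X \<subseteq> space S" "X \<noteq> {}"
  shows "uniformly_ergodic S X (imh_kernel S \<nu> w) \<pi>"
proof -
  let ?K = "imh_kernel S \<nu> w"
  obtain x0 where x0: "x0 \<in> X" using X by blast
  then have x0S: "x0 \<in> space S" using X by blast
  define e where "e = 1/(c*B)"
  have epos: "0 < e" unfolding e_def using c_pos B_pos by simp
  have mn: "\<And>x A. x \<in> space S \<Longrightarrow> A \<in> sets S \<Longrightarrow> ennreal e * emeasure \<pi> A \<le> emeasure (?K x) A"
    unfolding e_def by (rule minor)
  have ele: "e \<le> 1"
  proof -
    have "ennreal e * emeasure \<pi> (space S) \<le> emeasure (?K x0) (space S)" by (rule mn[OF x0S sets.top])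
    moreover have "emeasure \<pi> (space S) = 1"
      using prob_space.emeasure_space_1[OF pi_prob] space_nu by simp
    moreover have "emeasure (?K x0) (space S) = 1"
      using prob_space.emeasure_space_1[OF K_prob[OF x0S]] by simp
    ultimately show ?thesis by simp
  qed
  have tvb: "tv_dist (kpow S ?K n x) \<pi> \<le> (1-e)^n \<and> 0 \<le> tv_dist (kpow S ?K n x) \<pi>" if x: "x \<in> X" for n x
  proof -
    have xS: "x \<in> space S" using x X by blast
    have kin: "kpow S ?K n x \<in> space (prob_algebra S)" by (rule kpow_in[OF xS])
    then have kp: "prob_space (kpow S ?K n x)" and ks: "sets (kpow S ?K n x) = sets S"
      by (auto simp: space_prob_algebra)
    have a01: "0 \<le> 1 - (1-e)^n" "1 - (1-e)^n \<le> 1" using epos ele by (auto simp: power_le_one)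
    have low: "\<forall>A\<in>sets S. ennreal (1 - (1-e)^n) * emeasure \<pi> A \<le> emeasure (kpow S ?K n x) A"
      by (rule kpow_lower[OF epos ele mn xS])
    show ?thesis using tv_bound[OF kp ks a01 low] by simp
  qed
  have ub: "(SUP x\<in>X. tv_dist (kpow S ?K n x) \<pi>) \<le> (1-e)^n" for n
    by (rule cSUP_least) (use X tvb in auto)
  have lb: "0 \<le> (SUP x\<in>X. tv_dist (kpow S ?K n x) \<pi>)" for n
  proof -
    have bdd: "bdd_above ((\<lambda>x. tv_dist (kpow S ?K n x) \<pi>) ` X)"
      by (rule bdd_aboveI2[where M="(1-e)^n"]) (use tvb in auto)
    show ?thesis by (rule cSUP_upper2[OF bdd x0]) (use tvb x0 in auto)
  qed
  have lim: "(\<lambda>n. (1-e)^n) \<longlonglongrightarrow> 0"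
    by (rule LIMSEQ_power_zero) (use epos ele in auto)
  show ?thesis unfolding uniformly_ergodic_def
    by (rule tendsto_sandwich[OF always_eventually always_eventually tendsto_const lim]) (use lb ub in auto)
qed

end



locale hmm_setting =
  fixes M :: "'a measure"
    and p0 :: "'a \<Rightarrow> real" and tr :: "'a \<Rightarrow> 'a \<Rightarrow> real" and lik :: "nat \<Rightarrow> 'a \<Rightarrow> real"
    and q0 :: "'a \<Rightarrow> real" and q :: "nat \<Rightarrow> (nat \<Rightarrow> 'a) \<Rightarrow> 'a \<Rightarrow> real"
    and k N :: nat and xs :: "nat \<Rightarrow> (nat \<Rightarrow> 'a)"
  assumes sf: "sigma_finite_measure M"
    and p0: "p0 \<in> borel_measurable M" "\<forall>a. p0 a \<ge> 0" "(\<integral>\<^sup>+a. ennreal (p0 a) \<partial>M) = 1"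
    and tr: "(\<lambda>(u, v). tr u v) \<in> borel_measurable (M \<Otimes>\<^sub>M M)" "\<forall>u v. tr u v \<ge> 0"
            "\<forall>u\<in>space M. (\<integral>\<^sup>+v. ennreal (tr u v) \<partial>M) = 1"
    and lik: "\<forall>l. lik l \<in> borel_measurable M" "\<forall>l a. lik l a \<ge> 0"
    and Z: "\<forall>j. integrable (Ek M j) (hmm_gamma p0 tr lik j) \<and> hmm_Z M p0 tr lik j > 0"
    and q0: "q0 \<in> borel_measurable M" "\<forall>a. q0 a \<ge> 0" "(\<integral>\<^sup>+a. ennreal (q0 a) \<partial>M) = 1"
    and q: "\<forall>j>0. (\<lambda>x. q j (restrict x {..<j}) (x j)) \<in> borel_measurable (Ek M j)"
           "\<forall>j y a. q j y a \<ge> 0"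
           "\<forall>j>0. \<forall>y\<in>space (Ek M (j - 1)). (\<integral>\<^sup>+a. ennreal (q j y a) \<partial>M) = 1"
    and bounded: "\<forall>j. \<exists>B::real. \<forall>x\<in>hmm_supp M p0 tr lik j. smc_weight p0 tr lik q0 q j x \<le> ennreal B"
    and k: "k > 0"
    and N: "N > 0"
    and samples: "\<forall>i<N. xs i \<in> hmm_supp M p0 tr lik (k - 1)"
    and norm_pos: "(\<integral>y. hmm_pred M p0 tr lik k y \<partial>emp_measure (Ek M (k - 1)) N xs) > 0"
begin

abbreviation "S \<equiv> Ek M k"
abbreviation "S' \<equiv> Ek M (k - 1)"
abbreviation "G \<equiv> hmm_gamma p0 tr lik"

lemma km1: "{..k - 1} = {..<k}" using k by auto

lemma S'_eq: "S' = PiM {..<k} (\<lambda>_. M)" unfolding Ek_def km1 ..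

lemma space_Ek: "space (Ek M j) = PiE {..j} (\<lambda>_. space M)"
  unfolding Ek_def by (simp add: space_PiM)

lemma space_S': "space S' = PiE {..<k} (\<lambda>_. space M)"
  unfolding S'_eq by (simp add: space_PiM)

lemma space_S'_simp: "space (Ek M (k - Suc 0)) = PiE {..<k} (\<lambda>_. space M)"
  using space_S' by simp

lemma tr_meas[measurable]: "(\<lambda>(u, v). tr u v) \<in> borel_measurable (M \<Otimes>\<^sub>M M)" using tr by simp
lemma lik_meas[measurable]: "lik l \<in> borel_measurable M" using lik by simp
lemma p0_meas[measurable]: "p0 \<in> borel_measurable M" using p0 by simp

lemma gamma_meas[measurable]: "G j \<in> borel_measurable (Ek M j)"
proof -
  have f: "(\<lambda>x. tr (x (l-1)) (x l) * lik l (x l)) \<in> borel_measurable (PiM {..j} (\<lambda>_. M))"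
    if "l \<in> {1..j}" for l
  proof -
    have "l - 1 \<in> {..j}" "l \<in> {..j}" using that by auto
    then show ?thesis by measurable
  qed
  have "(\<lambda>x. \<Prod>l\<in>{1..j}. tr (x (l-1)) (x l) * lik l (x l)) \<in> borel_measurable (PiM {..j} (\<lambda>_. M))"
    by (rule borel_measurable_prod) (use f in auto)
  then show ?thesis unfolding hmm_gamma_def Ek_def by measurable
qed

lemma upd_space: "y \<in> space S' \<Longrightarrow> a \<in> space M \<Longrightarrow> y(k := a) \<in> space S"
  by (auto simp: space_S'_simp space_Ek PiE_iff extensional_def)

lemma upd_meas[measurable]: "(\<lambda>\<omega>. (fst \<omega>)(k := snd \<omega>)) \<in> S' \<Otimes>\<^sub>M M \<rightarrow>\<^sub>M S"
proof -
  have "(\<lambda>\<omega> i. if i = k then snd \<omega> else fst \<omega> i) \<in> S' \<Otimes>\<^sub>M M \<rightarrow>\<^sub>M PiM {..k} (\<lambda>_. M)"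
  proof (rule measurable_PiM_single')
    fix i assume i: "i \<in> {..k}"
    show "(\<lambda>\<omega>. if i = k then snd \<omega> else fst \<omega> i) \<in> S' \<Otimes>\<^sub>M M \<rightarrow>\<^sub>M M"
    proof (cases "i = k")
      case True
      have "(\<lambda>\<omega>::(nat \<Rightarrow> 'a) \<times> 'a. if i = k then snd \<omega> else fst \<omega> i) = snd" using True by (simp add: fun_eq_iff)
      then show ?thesis using measurable_snd by metis
    next
      case False then have ik: "i \<in> {..<k}" using i by auto
      have "(\<lambda>x. x i) \<in> S' \<rightarrow>\<^sub>M M" unfolding S'_eq using ik by (rule measurable_component_singleton)
      then have "(\<lambda>\<omega>. fst \<omega> i) \<in> S' \<Otimes>\<^sub>M M \<rightarrow>\<^sub>M M" by (rule measurable_compose[OF measurable_fst])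
      moreover have "(\<lambda>\<omega>::(nat \<Rightarrow> 'a) \<times> 'a. if i = k then snd \<omega> else fst \<omega> i) = (\<lambda>\<omega>. fst \<omega> i)" using False by (simp add: fun_eq_iff)
      ultimately show ?thesis by metis
    qed
  next
    show "(\<lambda>\<omega> i. if i = k then snd \<omega> else fst \<omega> i) \<in> space (S' \<Otimes>\<^sub>M M) \<rightarrow> (\<Pi>\<^sub>E i\<in>{..k}. space M)"
    proof
      fix \<omega> assume "\<omega> \<in> space (S' \<Otimes>\<^sub>M M)"
      then have "\<omega> \<in> space S' \<times> space M" by (simp only: space_pair_measure)
      then have "fst \<omega> \<in> space S'" "snd \<omega> \<in> space M" by (metis mem_Times_iff)+
      then have "(fst \<omega>)(k := snd \<omega>) \<in> space S" by (rule upd_space)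
      then show "(\<lambda>i. if i = k then snd \<omega> else fst \<omega> i) \<in> PiE {..k} (\<lambda>_. space M)"
        by (simp only: space_Ek fun_upd_def)
    qed
  qed
  then show ?thesis by (simp only: Ek_def fun_upd_def)
qed

lemma upd_meas1[measurable]: "y \<in> space S' \<Longrightarrow> (\<lambda>a. y(k := a)) \<in> M \<rightarrow>\<^sub>M S"
proof -
  assume y: "y \<in> space S'"
  have "(\<lambda>a. (y, a)) \<in> M \<rightarrow>\<^sub>M S' \<Otimes>\<^sub>M M" using y by measurable
  from measurable_compose[OF this upd_meas] show ?thesis by simp
qed

lemma restrict_self: "y \<in> space S' \<Longrightarrow> restrict y {..<k} = y"
  unfolding space_S' by (rule PiE_restrict)

lemma restrict_upd: "y \<in> space S' \<Longrightarrow> restrict (y(k := a)) {..<k} = y"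
  by (auto simp: space_S'_simp PiE_iff extensional_def restrict_def fun_eq_iff)

lemma gamma_split: "G k (y(k := a)) = G (k - 1) y * (tr (y (k - 1)) a * lik k a)"
proof -
  have kk: "{1..k} = insert k {1..k-1}" using k by auto
  define f where "f l = tr ((y(k := a)) (l - 1)) ((y(k := a)) l) * lik l ((y(k := a)) l)" for l
  define g where "g l = tr (y (l - 1)) (y l) * lik l (y l)" for l
  have k1: "k - 1 \<noteq> k" using k by arith
  have 1: "prod f {1..k} = f k * prod f {1..k-1}" unfolding kk by (rule prod.insert) (use k in auto)
  have 2: "prod f {1..k-1} = prod g {1..k-1}" by (rule prod.cong) (auto simp: f_def g_def)
  have 3: "f k = tr (y (k-1)) a * lik k a" unfolding f_def using k1 by simp
  have 4: "G k (y(k := a)) = p0 (y 0) * prod f {1..k}" using k by (simp add: hmm_gamma_def f_def)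
  have 5: "G (k-1) y = p0 (y 0) * prod g {1..k-1}" by (simp add: hmm_gamma_def g_def)
  show ?thesis unfolding 4 5 1 2 3 by (simp add: mult_ac)
qed

lemma gamma_nonneg: "G j x \<ge> 0"
  unfolding hmm_gamma_def using p0 tr lik by (auto intro!: mult_nonneg_nonneg prod_nonneg)


lemma Z_pos: "hmm_Z M p0 tr lik j > 0" using Z by simp

lemma post_meas[measurable]: "hmm_post M p0 tr lik j \<in> borel_measurable (Ek M j)"
  unfolding hmm_post_def by measurable

lemma restr_meas[measurable]: "(\<lambda>x. restrict x {..<k}) \<in> S \<rightarrow>\<^sub>M S'"
  unfolding S'_eq unfolding Ek_def by (rule measurable_restrict_subset) auto

lemma q_meas[measurable]: "(\<lambda>x. q k (restrict x {..<k}) (x k)) \<in> borel_measurable S"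
  using q(1) k by simp

abbreviation "w \<equiv> smc_weight p0 tr lik q0 q k"

lemma w_def2: "w x = ennreal (G k x) / ennreal (G (k - 1) (restrict x {..<k}) * q k (restrict x {..<k}) (x k))"
  using k by (simp add: smc_weight_def)

lemma w_meas[measurable]: "w \<in> borel_measurable S"
proof -
  have g1: "(\<lambda>x. G (k - 1) (restrict x {..<k})) \<in> borel_measurable S"
    by (rule measurable_compose[OF restr_meas gamma_meas])
  have "(\<lambda>x. ennreal (G k x) / ennreal (G (k - 1) (restrict x {..<k}) * q k (restrict x {..<k}) (x k))) \<in> borel_measurable S"
    using g1 by measurable
  moreover have eq: "w = (\<lambda>x. ennreal (G k x) / ennreal (G (k - 1) (restrict x {..<k}) * q k (restrict x {..<k}) (x k)))"
    by (intro ext) (rule w_def2)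
  ultimately show ?thesis by (simp only: eq)
qed

definition "B0 = max 1 (SOME B. \<forall>x\<in>hmm_supp M p0 tr lik k. w x \<le> ennreal B)"

lemma B0_pos: "B0 > 0" unfolding B0_def by simp

lemma w_le: "\<forall>x\<in>space S. w x \<le> ennreal B0"
proof
  fix x assume x: "x \<in> space S"
  obtain B where B: "\<forall>x\<in>hmm_supp M p0 tr lik k. w x \<le> ennreal B" using bounded by blast
  then have B': "\<forall>x\<in>hmm_supp M p0 tr lik k. w x \<le> ennreal (SOME B. \<forall>x\<in>hmm_supp M p0 tr lik k. w x \<le> ennreal B)"
    by (rule someI)
  show "w x \<le> ennreal B0"
  proof (cases "G k x = 0")
    case True then show ?thesis by (simp add: w_def2)
  next
    case False
    then have "G k x > 0" using gamma_nonneg[of k x] by simp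
    then have "hmm_post M p0 tr lik k x > 0" unfolding hmm_post_def using Z_pos[of k] by simp
    then have "x \<in> hmm_supp M p0 tr lik k" unfolding hmm_supp_def using x by simp
    then have "w x \<le> ennreal (SOME B. \<forall>x\<in>hmm_supp M p0 tr lik k. w x \<le> ennreal B)" using B' by blast
    also have "\<dots> \<le> ennreal B0" unfolding B0_def by (rule ennreal_leI) simp
    finally show ?thesis .
  qed
qed

lemma sample_space: "i < N \<Longrightarrow> xs i \<in> space S'"
  using samples unfolding hmm_supp_def by auto

lemma sample_pos: "i < N \<Longrightarrow> G (k - 1) (xs i) > 0"
proof -
  assume i: "i < N"
  then have "hmm_post M p0 tr lik (k - 1) (xs i) > 0" using samples unfolding hmm_supp_def by auto
  then show ?thesis unfolding hmm_post_def using Z_pos[of "k-1"] gamma_nonneg[of "k-1" "xs i"]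
    by (simp add: zero_less_divide_iff)
qed

definition "t y a = tr (y (k - 1)) a * lik k a"

lemma t_nonneg: "t y a \<ge> 0" unfolding t_def using tr lik by simp

lemma w_upd: assumes y: "y \<in> space S'"
  shows "w (y(k := a)) = ennreal (G (k - 1) y * t y a) / ennreal (G (k - 1) y * q k y a)"
  unfolding w_def2 restrict_upd[OF y] gamma_split t_def by simp

lemma t_le: assumes y: "y \<in> space S'" and Gy: "G (k - 1) y > 0" and a: "a \<in> space M"
  shows "t y a \<le> B0 * q k y a"
proof (cases "t y a = 0")
  case True then show ?thesis using B0_pos q(2) by simp
next
  case False
  then have tp: "t y a > 0" using t_nonneg[of y a] by simp
  have wle: "w (y(k := a)) \<le> ennreal B0" using w_le upd_space[OF y a] by blast
  have qp: "q k y a > 0"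
  proof (rule ccontr)
    assume "\<not> q k y a > 0"
    then have "q k y a = 0" using q(2) by (metis order_less_le)
    then have "w (y(k := a)) = top" unfolding w_upd[OF y] using Gy tp by simp
    then show False using wle by (simp add: top_unique)
  qed
  have "w (y(k := a)) = ennreal (t y a / q k y a)"
    unfolding w_upd[OF y] using Gy tp qp by (simp add: divide_ennreal)
  then have "t y a / q k y a \<le> B0" using wle B0_pos by simp
  then show ?thesis using qp by (simp add: divide_le_eq)
qed

lemma qw: assumes y: "y \<in> space S'" and Gy: "G (k - 1) y > 0" and a: "a \<in> space M"
  shows "ennreal (q k y a) * w (y(k := a)) = ennreal (t y a)"
proof (cases "q k y a = 0")
  case True
  then have "t y a = 0" using t_le[OF y Gy a] t_nonneg[of y a] by simp
  then show ?thesis using True by simp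
next
  case False
  then have qp: "q k y a > 0" using q(2) by (metis order_less_le)
  have "w (y(k := a)) = ennreal (t y a / q k y a)"
    unfolding w_upd[OF y] using Gy qp t_nonneg[of y a] by (simp add: divide_ennreal)
  then show ?thesis using qp t_nonneg[of y a] by (simp add: ennreal_mult[symmetric])
qed


lemma ykm1: "y \<in> space S' \<Longrightarrow> y (k - 1) \<in> space M"
proof -
  assume "y \<in> space S'"
  then have "y \<in> PiE {..<k} (\<lambda>_. space M)" by (simp only: space_S')
  moreover have "k - 1 \<in> {..<k}" using k by simp
  ultimately show ?thesis by (rule PiE_mem)
qed

lemma t_meas[measurable]: "y \<in> space S' \<Longrightarrow> t y \<in> borel_measurable M"
proof -
  assume y: "y \<in> space S'"
  have [measurable]: "y (k - 1) \<in> space M" by (rule ykm1[OF y])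
  show ?thesis unfolding t_def by measurable
qed

lemma qy_meas[measurable]: "y \<in> space S' \<Longrightarrow> q k y \<in> borel_measurable M"
proof -
  assume y: "y \<in> space S'"
  have "(\<lambda>a. q k (restrict (y(k := a)) {..<k}) ((y(k := a)) k)) \<in> borel_measurable M"
    by (rule measurable_compose[OF upd_meas1[OF y] q_meas])
  then show ?thesis unfolding restrict_upd[OF y] by simp
qed

lemma q_int1: "y \<in> space S' \<Longrightarrow> (\<integral>\<^sup>+a. ennreal (q k y a) \<partial>M) = 1"
  using q(3) k by simp

lemma t_int: assumes y: "y \<in> space S'" and Gy: "G (k - 1) y > 0"
  shows "integrable M (t y)" "(\<integral>\<^sup>+a. ennreal (t y a) \<partial>M) = ennreal (\<integral>a. t y a \<partial>M)"
proof -
  have "(\<integral>\<^sup>+a. ennreal (t y a) \<partial>M) \<le> (\<integral>\<^sup>+a. ennreal B0 * ennreal (q k y a) \<partial>M)"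
  proof (rule nn_integral_mono)
    fix a assume a: "a \<in> space M"
    have "ennreal (t y a) \<le> ennreal (B0 * q k y a)" using t_le[OF y Gy a] by (rule ennreal_leI)
    moreover have "ennreal (B0 * q k y a) = ennreal B0 * ennreal (q k y a)"
      using B0_pos by (intro ennreal_mult') simp
    ultimately show "ennreal (t y a) \<le> ennreal B0 * ennreal (q k y a)" by simp
  qed
  also have "\<dots> = ennreal B0 * (\<integral>\<^sup>+a. ennreal (q k y a) \<partial>M)"
  proof (rule nn_integral_cmult)
    have [measurable]: "q k y \<in> borel_measurable M" by (rule qy_meas[OF y])
    show "(\<lambda>a. ennreal (q k y a)) \<in> borel_measurable M" by measurable
  qed
  also have "\<dots> = ennreal B0" using q_int1[OF y] by simp
  finally have fin: "(\<integral>\<^sup>+a. ennreal (t y a) \<partial>M) < \<infinity>" by (simp add: le_less_trans)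
  show int: "integrable M (t y)"
    by (rule integrableI_nonneg) (use y fin t_nonneg in auto)
  show "(\<integral>\<^sup>+a. ennreal (t y a) \<partial>M) = ennreal (\<integral>a. t y a \<partial>M)"
    by (rule nn_integral_eq_integral[OF int]) (simp add: t_nonneg)
qed

definition "T y = (\<integral>a. t y a \<partial>M)"

lemma T_nonneg: "T y \<ge> 0" unfolding T_def by (simp add: t_nonneg)

lemma post_upd: "hmm_post M p0 tr lik k (y(k := a)) = G (k - 1) y * t y a / hmm_Z M p0 tr lik k"
  unfolding hmm_post_def gamma_split t_def ..

lemma marg_eq: "hmm_marg M p0 tr lik k y = G (k - 1) y * T y / hmm_Z M p0 tr lik k"
  unfolding hmm_marg_def post_upd T_def by simp

lemma cond_eq: assumes Gy: "G (k - 1) y > 0"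
  shows "hmm_cond M p0 tr lik k y a = t y a / T y"
proof -
  have Zk: "hmm_Z M p0 tr lik k > 0" by (rule Z_pos)
  show ?thesis unfolding hmm_cond_def post_upd marg_eq
    using Gy Zk by (cases "T y = 0") (simp_all add: field_simps)
qed

lemma pred_eq: assumes Gy: "G (k - 1) y > 0"
  shows "hmm_pred M p0 tr lik k y = T y * hmm_Z M p0 tr lik (k - 1) / hmm_Z M p0 tr lik k"
proof -
  have Zk: "hmm_Z M p0 tr lik k > 0" "hmm_Z M p0 tr lik (k - 1) > 0" by (rule Z_pos)+
  show ?thesis unfolding hmm_pred_def marg_eq hmm_post_def
    using Gy Zk by (simp add: field_simps)
qed

lemma q2_meas: "(\<lambda>(y, a). q k y a) \<in> borel_measurable (S' \<Otimes>\<^sub>M M)"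
proof -
  have "(\<lambda>\<omega>. q k (restrict ((fst \<omega>)(k := snd \<omega>)) {..<k}) (((fst \<omega>)(k := snd \<omega>)) k)) \<in> borel_measurable (S' \<Otimes>\<^sub>M M)"
    by (rule measurable_compose[OF upd_meas q_meas])
  then show ?thesis
  proof (rule measurable_cong[THEN iffD1, rotated])
    fix \<omega> assume "\<omega> \<in> space (S' \<Otimes>\<^sub>M M)"
    then have "\<omega> \<in> space S' \<times> space M" by (simp only: space_pair_measure)
    then have "fst \<omega> \<in> space S'" by (metis mem_Times_iff)
    then show "q k (restrict ((fst \<omega>)(k := snd \<omega>)) {..<k}) (((fst \<omega>)(k := snd \<omega>)) k) = (case \<omega> of (y, a) \<Rightarrow> q k y a)"
      by (simp add: restrict_self split_beta)
  qed
qed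

lemma post2_meas: "(\<lambda>(y, a). hmm_post M p0 tr lik k (y(k := a))) \<in> borel_measurable (S' \<Otimes>\<^sub>M M)"
proof -
  have "(\<lambda>\<omega>. hmm_post M p0 tr lik k ((fst \<omega>)(k := snd \<omega>))) \<in> borel_measurable (S' \<Otimes>\<^sub>M M)"
    by (rule measurable_compose[OF upd_meas post_meas])
  then show ?thesis by (simp add: split_beta)
qed

lemma marg_meas[measurable]: "hmm_marg M p0 tr lik k \<in> borel_measurable S'"
proof -
  have "(\<lambda>y. \<integral>a. hmm_post M p0 tr lik k (y(k := a)) \<partial>M) \<in> borel_measurable S'"
    by (rule sigma_finite_measure.borel_measurable_lebesgue_integral[OF sf]) (use post2_meas in simp)
  then show ?thesis unfolding hmm_marg_def[abs_def] .
qed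

lemma cond2_meas: "(\<lambda>(y, a). hmm_cond M p0 tr lik k y a) \<in> borel_measurable (S' \<Otimes>\<^sub>M M)"
proof -
  have m1: "(\<lambda>\<omega>. hmm_marg M p0 tr lik k (fst \<omega>)) \<in> borel_measurable (S' \<Otimes>\<^sub>M M)"
    by (rule measurable_compose[OF measurable_fst marg_meas])
  have "(\<lambda>\<omega>. hmm_post M p0 tr lik k ((fst \<omega>)(k := snd \<omega>)) / hmm_marg M p0 tr lik k (fst \<omega>)) \<in> borel_measurable (S' \<Otimes>\<^sub>M M)"
    using post2_meas m1 by (simp add: split_beta)
  then show ?thesis unfolding hmm_cond_def by (simp add: split_beta)
qed

lemma pred_meas[measurable]: "hmm_pred M p0 tr lik k \<in> borel_measurable S'"
proof -
  have "hmm_post M p0 tr lik (k - 1) \<in> borel_measurable S'" by (rule post_meas)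
  then show ?thesis unfolding hmm_pred_def[abs_def] by measurable
qed


abbreviation "U \<equiv> measure_pmf (pmf_of_set {..<N})"
definition "xs' i = (if i < N then xs i else xs 0)"

lemma xs'_space: "xs' i \<in> space S'"
  unfolding xs'_def using sample_space N by simp

lemma Nne: "{..<N} \<noteq> {}" using N by auto

lemma U_int: "(\<integral>\<^sup>+i. f i \<partial>U) = (\<Sum>i<N. f i) / of_nat N"
  using nn_integral_pmf_of_set[OF Nne finite_lessThan, of f] by simp

lemma U_int': "(\<integral>\<^sup>+i. f (xs' i) \<partial>U) = (\<Sum>i<N. f (xs i)) / of_nat N"
  unfolding U_int by (simp add: xs'_def)

lemma ret_meas: "(\<lambda>i. return S' (xs' i)) \<in> U \<rightarrow>\<^sub>M subprob_algebra S'"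
  using xs'_space by (simp add: space_subprob_algebra subprob_space_return)

lemma emp_eq: "emp_measure S' N xs = bind U (\<lambda>i. return S' (xs' i))"
proof -
  let ?R = "bind U (\<lambda>i. return S' (xs' i))"
  have sR: "sets ?R = sets S'" by (rule sets_bind) auto
  have spR: "space ?R = space S'" using sR by (rule sets_eq_imp_space_eq)
  have "emp_measure S' N xs = measure_of (space S') (sets S') (emeasure ?R)"
    unfolding emp_measure_def
  proof (rule measure_of_eq)
    show "sets S' \<subseteq> Pow (space S')" by (rule sets.space_closed)
    fix a assume "a \<in> sigma_sets (space S') (sets S')"
    then have a: "a \<in> sets S'" by (simp add: sets.sigma_sets_eq)
    have "emeasure ?R a = (\<integral>\<^sup>+i. emeasure (return S' (xs' i)) a \<partial>U)"
      by (rule emeasure_bind[OF _ ret_meas a]) simp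
    also have "\<dots> = (\<integral>\<^sup>+i. indicator a (xs' i) \<partial>U)" using a by simp
    also have "\<dots> = (\<Sum>i<N. indicator a (xs i)) / of_nat N" by (rule U_int')
    finally show "(\<Sum>i<N. indicator a (xs i)) / of_nat N = emeasure ?R a" by simp
  qed
  also have "\<dots> = ?R" using measure_of_of_measure[of ?R] unfolding sR spR .
  finally show ?thesis .
qed

lemma sets_emp: "sets (emp_measure S' N xs) = sets S'"
  unfolding emp_measure_def by (simp add: sets.sets_measure_of_eq)

lemma emp_int: assumes F: "F \<in> borel_measurable S'"
  shows "(\<integral>\<^sup>+y. F y \<partial>emp_measure S' N xs) = (\<Sum>i<N. F (xs i)) / of_nat N"
proof -
  have "(\<integral>\<^sup>+y. F y \<partial>emp_measure S' N xs) = (\<integral>\<^sup>+i. \<integral>\<^sup>+y. F y \<partial>return S' (xs' i) \<partial>U)"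
    unfolding emp_eq by (rule nn_integral_bind[OF F ret_meas])
  also have "\<dots> = (\<integral>\<^sup>+i. F (xs' i) \<partial>U)"
    by (rule nn_integral_cong) (rule nn_integral_return[OF xs'_space F])
  also have "\<dots> = (\<Sum>i<N. F (xs i)) / of_nat N" by (rule U_int')
  finally show ?thesis .
qed

lemma post_nonneg: "hmm_post M p0 tr lik j x \<ge> 0"
  unfolding hmm_post_def using gamma_nonneg Z_pos[of j] by simp

lemma pred_nonneg: "hmm_pred M p0 tr lik k y \<ge> 0"
  unfolding hmm_pred_def hmm_marg_def using post_nonneg
  by (simp add: divide_nonneg_nonneg integral_nonneg)

lemma int_pred: "(\<integral>y. hmm_pred M p0 tr lik k y \<partial>emp_measure S' N xs) = (\<Sum>i<N. hmm_pred M p0 tr lik k (xs i)) / N"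
proof -
  have m: "hmm_pred M p0 tr lik k \<in> borel_measurable (emp_measure S' N xs)"
    unfolding measurable_cong_sets[OF sets_emp refl] by (rule pred_meas)
  have "(\<integral>y. hmm_pred M p0 tr lik k y \<partial>emp_measure S' N xs) = enn2real (\<integral>\<^sup>+y. ennreal (hmm_pred M p0 tr lik k y) \<partial>emp_measure S' N xs)"
    by (rule integral_eq_nn_integral[OF m]) (simp add: pred_nonneg)
  also have "(\<integral>\<^sup>+y. ennreal (hmm_pred M p0 tr lik k y) \<partial>emp_measure S' N xs) = (\<Sum>i<N. ennreal (hmm_pred M p0 tr lik k (xs i))) / of_nat N"
    by (rule emp_int) measurable
  also have "\<dots> = ennreal ((\<Sum>i<N. hmm_pred M p0 tr lik k (xs i)) / N)"
    using N by (simp add: pred_nonneg sum_nonneg ennreal_of_nat_eq_real_of_nat divide_ennreal)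
  finally show ?thesis by (simp add: pred_nonneg sum_nonneg)
qed


definition "D p i = distr (density M (\<lambda>a. ennreal (p (xs' i) a))) S (\<lambda>a. (xs' i)(k := a))"

lemma p_sec: assumes pm: "(\<lambda>(y, a). p y a) \<in> borel_measurable (S' \<Otimes>\<^sub>M M)" and y: "y \<in> space S'"
  shows "p y \<in> borel_measurable M"
  using measurable_Pair2[OF pm y] by simp

lemma spaceM_ne: "space M \<noteq> {}" using ykm1[OF xs'_space[of 0]] by auto

lemma space_S_ne: "space S \<noteq> {}"
proof -
  obtain a where "a \<in> space M" using spaceM_ne by auto
  then show ?thesis using upd_space[OF xs'_space[of 0]] by auto
qed

lemma xs'_sub: assumes sub: "\<forall>i<N. (\<integral>\<^sup>+a. ennreal (p (xs i) a) \<partial>M) \<le> 1"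
  shows "(\<integral>\<^sup>+a. ennreal (p (xs' i) a) \<partial>M) \<le> 1"
  using sub N unfolding xs'_def by auto

lemma D_emeasure: assumes pm: "(\<lambda>(y, a). p y a) \<in> borel_measurable (S' \<Otimes>\<^sub>M M)" and A: "A \<in> sets S"
  shows "emeasure (D p i) A = (\<integral>\<^sup>+a. ennreal (p (xs' i) a) * indicator A ((xs' i)(k := a)) \<partial>M)"
proof -
  have pmi[measurable]: "p (xs' i) \<in> borel_measurable M" by (rule p_sec[OF pm xs'_space])
  have um: "(\<lambda>a. (xs' i)(k := a)) \<in> M \<rightarrow>\<^sub>M S" by (rule upd_meas1[OF xs'_space])
  have pre[measurable]: "(\<lambda>a. (xs' i)(k := a)) -` A \<inter> space M \<in> sets M" by (rule measurable_sets[OF um A])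
  have um': "(\<lambda>a. (xs' i)(k := a)) \<in> density M (\<lambda>a. ennreal (p (xs' i) a)) \<rightarrow>\<^sub>M S" using um by simp
  have "emeasure (D p i) A = emeasure (density M (\<lambda>a. ennreal (p (xs' i) a))) ((\<lambda>a. (xs' i)(k := a)) -` A \<inter> space (density M (\<lambda>a. ennreal (p (xs' i) a))))"
    unfolding D_def by (rule emeasure_distr[OF um' A])
  also have "\<dots> = emeasure (density M (\<lambda>a. ennreal (p (xs' i) a))) ((\<lambda>a. (xs' i)(k := a)) -` A \<inter> space M)"
    by simp
  also have "\<dots> = (\<integral>\<^sup>+a. ennreal (p (xs' i) a) * indicator ((\<lambda>a. (xs' i)(k := a)) -` A \<inter> space M) a \<partial>M)"
    by (rule emeasure_density) measurable
  also have "\<dots> = (\<integral>\<^sup>+a. ennreal (p (xs' i) a) * indicator A ((xs' i)(k := a)) \<partial>M)"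
    by (rule nn_integral_cong) (simp add: indicator_def)
  finally show ?thesis .
qed

lemma D_sets: "sets (D p i) = sets S" unfolding D_def by simp

lemma D_meas: assumes pm: "(\<lambda>(y, a). p y a) \<in> borel_measurable (S' \<Otimes>\<^sub>M M)"
    and sub: "\<forall>i<N. (\<integral>\<^sup>+a. ennreal (p (xs i) a) \<partial>M) \<le> 1"
  shows "D p \<in> U \<rightarrow>\<^sub>M subprob_algebra S"
proof -
  have "D p i \<in> space (subprob_algebra S)" for i
  proof -
    have sp: "space (D p i) = space S" unfolding D_def by simp
    have "emeasure (D p i) (space S) = (\<integral>\<^sup>+a. ennreal (p (xs' i) a) * indicator (space S) ((xs' i)(k := a)) \<partial>M)"
      by (rule D_emeasure[OF pm sets.top])
    also have "\<dots> = (\<integral>\<^sup>+a. ennreal (p (xs' i) a) \<partial>M)"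
      by (rule nn_integral_cong) (simp add: upd_space[OF xs'_space])
    also have "\<dots> \<le> 1" by (rule xs'_sub[OF sub])
    finally have "emeasure (D p i) (space (D p i)) \<le> 1" unfolding sp .
    moreover have "space (D p i) \<noteq> {}" unfolding sp by (rule space_S_ne)
    ultimately have "subprob_space (D p i)" by (rule subprob_spaceI)
    then show ?thesis by (simp add: space_subprob_algebra D_sets)
  qed
  then show ?thesis by simp
qed

lemma sets_ext: "sets (ext_prod M k \<mu> p) = sets S"
  unfolding ext_prod_def by (simp add: sets.sets_measure_of_eq)

lemma ext_eq: assumes pm: "(\<lambda>(y, a). p y a) \<in> borel_measurable (S' \<Otimes>\<^sub>M M)"
    and sub: "\<forall>i<N. (\<integral>\<^sup>+a. ennreal (p (xs i) a) \<partial>M) \<le> 1"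
  shows "ext_prod M k (emp_measure S' N xs) p = bind U (D p)"
proof -
  let ?R = "bind U (D p)"
  have sR: "sets ?R = sets S" by (rule sets_bind) (auto simp: D_sets)
  have spR: "space ?R = space S" using sR by (rule sets_eq_imp_space_eq)
  have "ext_prod M k (emp_measure S' N xs) p = measure_of (space S) (sets S) (emeasure ?R)"
    unfolding ext_prod_def
  proof (rule measure_of_eq)
    show "sets S \<subseteq> Pow (space S)" by (rule sets.space_closed)
    fix A assume "A \<in> sigma_sets (space S) (sets S)"
    then have A: "A \<in> sets S" by (simp add: sets.sigma_sets_eq)
    have FA: "(\<lambda>y. \<integral>\<^sup>+a. ennreal (p y a) * indicator A (y(k := a)) \<partial>M) \<in> borel_measurable S'"
    proof (rule sigma_finite_measure.borel_measurable_nn_integral[OF sf])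
      have i: "(\<lambda>\<omega>. indicator A ((fst \<omega>)(k := snd \<omega>)) :: ennreal) \<in> borel_measurable (S' \<Otimes>\<^sub>M M)"
        by (rule measurable_compose[OF upd_meas borel_measurable_indicator[OF A]])
      have "(\<lambda>\<omega>. ennreal (case \<omega> of (y, a) \<Rightarrow> p y a) * indicator A ((fst \<omega>)(k := snd \<omega>))) \<in> borel_measurable (S' \<Otimes>\<^sub>M M)"
        using pm i by measurable
      then show "(\<lambda>(y, a). ennreal (p y a) * indicator A (y(k := a))) \<in> borel_measurable (S' \<Otimes>\<^sub>M M)"
        by (simp add: split_beta)
    qed
    have "emeasure ?R A = (\<integral>\<^sup>+i. emeasure (D p i) A \<partial>U)"
      by (rule emeasure_bind[OF _ D_meas[OF pm sub] A]) simp
    also have "\<dots> = (\<integral>\<^sup>+i. (\<lambda>y. \<integral>\<^sup>+a. ennreal (p y a) * indicator A (y(k := a)) \<partial>M) (xs' i) \<partial>U)"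
      by (rule nn_integral_cong) (simp add: D_emeasure[OF pm A])
    also have "\<dots> = (\<Sum>i<N. (\<lambda>y. \<integral>\<^sup>+a. ennreal (p y a) * indicator A (y(k := a)) \<partial>M) (xs i)) / of_nat N"
      by (rule U_int')
    also have "\<dots> = (\<integral>\<^sup>+y. \<integral>\<^sup>+a. ennreal (p y a) * indicator A (y(k := a)) \<partial>M \<partial>emp_measure S' N xs)"
      by (rule emp_int[OF FA, symmetric])
    finally show "(\<integral>\<^sup>+y. \<integral>\<^sup>+a. ennreal (p y a) * indicator A (y(k := a)) \<partial>M \<partial>emp_measure S' N xs) = emeasure ?R A" by simp
  qed
  also have "\<dots> = ?R" using measure_of_of_measure[of ?R] unfolding sR spR .
  finally show ?thesis .
qed

lemma ext_int: assumes pm: "(\<lambda>(y, a). p y a) \<in> borel_measurable (S' \<Otimes>\<^sub>M M)"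
    and sub: "\<forall>i<N. (\<integral>\<^sup>+a. ennreal (p (xs i) a) \<partial>M) \<le> 1"
    and g: "g \<in> borel_measurable S"
  shows "(\<integral>\<^sup>+x. g x \<partial>ext_prod M k (emp_measure S' N xs) p) = (\<Sum>i<N. \<integral>\<^sup>+a. ennreal (p (xs i) a) * g ((xs i)(k := a)) \<partial>M) / of_nat N"
proof -
  have "(\<integral>\<^sup>+x. g x \<partial>ext_prod M k (emp_measure S' N xs) p) = (\<integral>\<^sup>+i. \<integral>\<^sup>+x. g x \<partial>D p i \<partial>U)"
    unfolding ext_eq[OF pm sub] by (rule nn_integral_bind[OF g D_meas[OF pm sub]])
  also have "\<dots> = (\<integral>\<^sup>+i. (\<lambda>y. \<integral>\<^sup>+a. ennreal (p y a) * g (y(k := a)) \<partial>M) (xs' i) \<partial>U)"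
  proof (rule nn_integral_cong)
    fix i
    have pmi[measurable]: "p (xs' i) \<in> borel_measurable M" by (rule p_sec[OF pm xs'_space])
    have um: "(\<lambda>a. (xs' i)(k := a)) \<in> M \<rightarrow>\<^sub>M S" by (rule upd_meas1[OF xs'_space])
    have gd: "g \<in> borel_measurable (distr (density M (\<lambda>a. ennreal (p (xs' i) a))) S (\<lambda>a. (xs' i)(k := a)))"
      using g by simp
    have gu: "(\<lambda>a. g ((xs' i)(k := a))) \<in> borel_measurable M" by (rule measurable_compose[OF um g])
    have "(\<integral>\<^sup>+x. g x \<partial>D p i) = (\<integral>\<^sup>+a. g ((xs' i)(k := a)) \<partial>density M (\<lambda>a. ennreal (p (xs' i) a)))"
      unfolding D_def by (rule nn_integral_distr) (use um gd in simp_all)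
    also have "\<dots> = (\<integral>\<^sup>+a. ennreal (p (xs' i) a) * g ((xs' i)(k := a)) \<partial>M)"
      by (rule nn_integral_density) (use gu in measurable)
    finally show "(\<integral>\<^sup>+x. g x \<partial>D p i) = (\<lambda>y. \<integral>\<^sup>+a. ennreal (p y a) * g (y(k := a)) \<partial>M) (xs' i)" by simp
  qed
  also have "\<dots> = (\<Sum>i<N. (\<lambda>y. \<integral>\<^sup>+a. ennreal (p y a) * g (y(k := a)) \<partial>M) (xs i)) / of_nat N"
    by (rule U_int')
  finally show ?thesis by simp
qed


abbreviation "emp \<equiv> emp_measure S' N xs"
abbreviation "\<nu>0 \<equiv> ext_prod M k emp (q k)"

lemma q_sub: "\<forall>i<N. (\<integral>\<^sup>+a. ennreal (q k (xs i) a) \<partial>M) \<le> 1"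
  using q_int1 sample_space by simp

lemma nu_int: "g \<in> borel_measurable S \<Longrightarrow> (\<integral>\<^sup>+x. g x \<partial>\<nu>0) = (\<Sum>i<N. \<integral>\<^sup>+a. ennreal (q k (xs i) a) * g ((xs i)(k := a)) \<partial>M) / of_nat N"
  by (rule ext_int[OF q2_meas q_sub])

lemma nu_sets: "sets \<nu>0 = sets S" by (rule sets_ext)

lemma nu_prob: "prob_space \<nu>0"
proof
  have sp: "space \<nu>0 = space S" using nu_sets by (rule sets_eq_imp_space_eq)
  have "(\<integral>\<^sup>+x. 1 \<partial>\<nu>0) = (\<Sum>i<N. \<integral>\<^sup>+a. ennreal (q k (xs i) a) * 1 \<partial>M) / of_nat N"
    by (rule nu_int) simp
  also have "\<dots> = (\<Sum>i<N. 1) / of_nat N"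
    using q_int1 sample_space by simp
  also have "\<dots> = 1" using N by (simp add: ennreal_of_nat_eq_real_of_nat)
  finally show "emeasure \<nu>0 (space \<nu>0) = 1" by simp
qed

definition "cc = (\<integral>y. hmm_pred M p0 tr lik k y \<partial>emp)"
definition "r = hmm_Z M p0 tr lik (k - 1) / hmm_Z M p0 tr lik k"
definition "c = r / cc"

lemma cc_pos: "cc > 0" unfolding cc_def using norm_pos by simp
lemma r_pos: "r > 0" unfolding r_def using Z_pos by simp
lemma c_pos: "c > 0" unfolding c_def using cc_pos r_pos by simp

lemma cc_eq: "cc = r * (\<Sum>i<N. T (xs i)) / N"
  unfolding cc_def int_pred r_def
  using sample_pos by (simp add: pred_eq sum_divide_distrib sum_distrib_left mult_ac)

lemma cond_sub: "\<forall>i<N. (\<integral>\<^sup>+a. ennreal (hmm_cond M p0 tr lik k (xs i) a) \<partial>M) \<le> 1"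
proof (intro allI impI)
  fix i assume i: "i < N"
  let ?y = "xs i"
  have y: "?y \<in> space S'" and Gy: "G (k - 1) ?y > 0" using sample_space sample_pos i by auto
  have "(\<integral>\<^sup>+a. ennreal (hmm_cond M p0 tr lik k ?y a) \<partial>M) = (\<integral>\<^sup>+a. ennreal (t ?y a) * ennreal (1 / T ?y) \<partial>M)"
    by (rule nn_integral_cong) (simp add: cond_eq[OF Gy] ennreal_mult''[symmetric] T_nonneg)
  also have "\<dots> = (\<integral>\<^sup>+a. ennreal (t ?y a) \<partial>M) * ennreal (1 / T ?y)"
    by (rule nn_integral_multc) (use t_meas[OF y] in measurable)
  also have "\<dots> = ennreal (T ?y * (1 / T ?y))"
    unfolding t_int(2)[OF y Gy] T_def[symmetric] by (simp add: ennreal_mult''[symmetric] T_nonneg)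
  also have "\<dots> \<le> 1" by (cases "T ?y = 0") simp_all
  finally show "(\<integral>\<^sup>+a. ennreal (hmm_cond M p0 tr lik k ?y a) \<partial>M) \<le> 1" .
qed

abbreviation "target \<equiv> density (ext_prod M k emp (hmm_cond M p0 tr lik k))
                    (\<lambda>x. ennreal (hmm_pred M p0 tr lik k (restrict x {..<k}) / cc))"

lemma target_eq: "target = density \<nu>0 (\<lambda>x. ennreal c * w x)"
proof (rule measure_eqI)
  show "sets target = sets (density \<nu>0 (\<lambda>x. ennreal c * w x))" by (simp add: sets_ext)
  fix A assume "A \<in> sets target"
  then have A: "A \<in> sets S" by (simp add: sets_ext)
  have pr[measurable]: "(\<lambda>x. hmm_pred M p0 tr lik k (restrict x {..<k})) \<in> borel_measurable S"
    by (rule measurable_compose[OF restr_meas pred_meas])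
  let ?ext = "ext_prod M k emp (hmm_cond M p0 tr lik k)"
  have "emeasure target A = (\<integral>\<^sup>+x. ennreal (hmm_pred M p0 tr lik k (restrict x {..<k}) / cc) * indicator A x \<partial>?ext)"
    by (rule emeasure_density) (use A in \<open>simp_all add: measurable_cong_sets[OF sets_ext refl] sets_ext\<close>)
  also have "\<dots> = (\<Sum>i<N. \<integral>\<^sup>+a. ennreal (hmm_cond M p0 tr lik k (xs i) a) *
        (ennreal (hmm_pred M p0 tr lik k (restrict ((xs i)(k := a)) {..<k}) / cc) * indicator A ((xs i)(k := a))) \<partial>M) / of_nat N"
    by (rule ext_int[OF cond2_meas cond_sub]) (use A in measurable)
  also have "\<dots> = (\<Sum>i<N. \<integral>\<^sup>+a. ennreal (q k (xs i) a) * (ennreal c * w ((xs i)(k := a)) * indicator A ((xs i)(k := a))) \<partial>M) / of_nat N"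
  proof -
    have "(\<integral>\<^sup>+a. ennreal (hmm_cond M p0 tr lik k (xs i) a) *
        (ennreal (hmm_pred M p0 tr lik k (restrict ((xs i)(k := a)) {..<k}) / cc) * indicator A ((xs i)(k := a))) \<partial>M)
      = (\<integral>\<^sup>+a. ennreal (q k (xs i) a) * (ennreal c * w ((xs i)(k := a)) * indicator A ((xs i)(k := a))) \<partial>M)"
      if i: "i < N" for i
    proof (rule nn_integral_cong_AE)
      let ?y = "xs i"
      have y: "?y \<in> space S'" and Gy: "G (k - 1) ?y > 0" using sample_space sample_pos i by auto
      have key: "ennreal (hmm_cond M p0 tr lik k ?y a) * ennreal (hmm_pred M p0 tr lik k (restrict (?y(k := a)) {..<k}) / cc)
          = ennreal (q k ?y a) * (ennreal c * w (?y(k := a)))"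
        if a: "a \<in> space M" and tT: "T ?y = 0 \<Longrightarrow> t ?y a = 0" for a
      proof -
        have rhs: "ennreal (q k ?y a) * (ennreal c * w (?y(k := a))) = ennreal (c * t ?y a)"
        proof -
          have "ennreal (q k ?y a) * (ennreal c * w (?y(k := a))) = ennreal c * (ennreal (q k ?y a) * w (?y(k := a)))"
            by (simp add: mult_ac)
          also have "\<dots> = ennreal c * ennreal (t ?y a)" using qw[OF y Gy a] by simp
          also have "\<dots> = ennreal (c * t ?y a)" using c_pos by (simp add: ennreal_mult')
          finally show ?thesis .
        qed
        show ?thesis
        proof (cases "T ?y = 0")
          case True
          then show ?thesis unfolding rhs cond_eq[OF Gy] using tT by simp
        next
          case False
          then have Tp: "T ?y > 0" using T_nonneg[of ?y] by simp
          have "ennreal (hmm_cond M p0 tr lik k ?y a) * ennreal (hmm_pred M p0 tr lik k (restrict (?y(k := a)) {..<k}) / cc)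
              = ennreal (t ?y a / T ?y * (T ?y * r / cc))"
          proof -
            have pe: "hmm_pred M p0 tr lik k ?y = T ?y * r" using pred_eq[OF Gy] unfolding r_def by simp
            have "ennreal (hmm_cond M p0 tr lik k ?y a) * ennreal (hmm_pred M p0 tr lik k (restrict (?y(k := a)) {..<k}) / cc)
               = ennreal (t ?y a / T ?y) * ennreal (T ?y * r / cc)"
              by (simp only: cond_eq[OF Gy] restrict_upd[OF y] pe)
            also have "\<dots> = ennreal (t ?y a / T ?y * (T ?y * r / cc))"
              by (rule ennreal_mult[symmetric]) (use Tp t_nonneg[of ?y a] r_pos cc_pos in simp_all)
            finally show ?thesis .
          qed
          also have "t ?y a / T ?y * (T ?y * r / cc) = c * t ?y a" using Tp unfolding c_def by (simp add: field_simps)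
          finally show ?thesis unfolding rhs .
        qed
      qed
      have keyA: "ennreal (hmm_cond M p0 tr lik k ?y a) *
        (ennreal (hmm_pred M p0 tr lik k (restrict (?y(k := a)) {..<k}) / cc) * indicator A (?y(k := a)))
        = ennreal (q k ?y a) * (ennreal c * w (?y(k := a)) * indicator A (?y(k := a)))"
        if a: "a \<in> space M" and tT: "T ?y = 0 \<Longrightarrow> t ?y a = 0" for a
        using key[OF a tT] by (metis mult.assoc)
      show "AE a in M. ennreal (hmm_cond M p0 tr lik k ?y a) *
        (ennreal (hmm_pred M p0 tr lik k (restrict (?y(k := a)) {..<k}) / cc) * indicator A (?y(k := a)))
        = ennreal (q k ?y a) * (ennreal c * w (?y(k := a)) * indicator A (?y(k := a)))"
      proof (cases "T ?y = 0")
        case True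
        have "AE a in M. t ?y a = 0"
          using integral_nonneg_eq_0_iff_AE[OF t_int(1)[OF y Gy]] True unfolding T_def by (simp add: t_nonneg)
        from this AE_space show ?thesis
          by eventually_elim (rule keyA; simp)
      next
        case False
        show ?thesis using False by (intro AE_I2 keyA) auto
      qed
    qed
    note eqi = this
    show ?thesis
      by (rule arg_cong[where f="\<lambda>s. s / of_nat N"], rule sum.cong[OF refl], rule eqi, simp)
  qed
  also have "\<dots> = (\<integral>\<^sup>+x. ennreal c * w x * indicator A x \<partial>\<nu>0)"
    by (rule nu_int[symmetric]) (use A in measurable)
  also have "\<dots> = emeasure (density \<nu>0 (\<lambda>x. ennreal c * w x)) A"
    by (rule emeasure_density[symmetric]) (use A in \<open>simp_all add: measurable_cong_sets[OF sets_ext refl] sets_ext\<close>)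
  finally show "emeasure target A = emeasure (density \<nu>0 (\<lambda>x. ennreal c * w x)) A" .
qed


lemma cT: "c * (\<Sum>i<N. T (xs i)) = N"
proof -
  have Spos: "(\<Sum>i<N. T (xs i)) > 0"
  proof -
    have "r * (\<Sum>i<N. T (xs i)) / N > 0" using cc_pos cc_eq by simp
    then show ?thesis using r_pos N by (simp add: zero_less_divide_iff zero_less_mult_iff)
  qed
  show ?thesis unfolding c_def cc_eq using Spos r_pos N by (simp add: field_simps)
qed

lemma pi_prob: "prob_space (density \<nu>0 (\<lambda>x. ennreal c * w x))"
proof
  have "emeasure (density \<nu>0 (\<lambda>x. ennreal c * w x)) (space \<nu>0) = (\<integral>\<^sup>+x. ennreal c * w x * indicator (space \<nu>0) x \<partial>\<nu>0)"
    by (rule emeasure_density) (simp_all add: measurable_cong_sets[OF sets_ext refl])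
  also have "\<dots> = (\<integral>\<^sup>+x. ennreal c * w x \<partial>\<nu>0)" by (rule nn_integral_cong) simp
  also have "\<dots> = (\<Sum>i<N. \<integral>\<^sup>+a. ennreal (q k (xs i) a) * (ennreal c * w ((xs i)(k := a))) \<partial>M) / of_nat N"
    by (rule nu_int) measurable
  also have "\<dots> = (\<Sum>i<N. ennreal (c * T (xs i))) / of_nat N"
  proof -
    have "(\<integral>\<^sup>+a. ennreal (q k (xs i) a) * (ennreal c * w ((xs i)(k := a))) \<partial>M) = ennreal (c * T (xs i))"
      if i: "i < N" for i
    proof -
      have y: "xs i \<in> space S'" and Gy: "G (k - 1) (xs i) > 0" using sample_space sample_pos i by auto
      have "(\<integral>\<^sup>+a. ennreal (q k (xs i) a) * (ennreal c * w ((xs i)(k := a))) \<partial>M) = (\<integral>\<^sup>+a. ennreal c * ennreal (t (xs i) a) \<partial>M)"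
      proof (rule nn_integral_cong)
        fix a assume a: "a \<in> space M"
        have "ennreal (q k (xs i) a) * (ennreal c * w ((xs i)(k := a))) = ennreal c * (ennreal (q k (xs i) a) * w ((xs i)(k := a)))"
          by (simp add: mult_ac)
        then show "ennreal (q k (xs i) a) * (ennreal c * w ((xs i)(k := a))) = ennreal c * ennreal (t (xs i) a)"
          using qw[OF y Gy a] by simp
      qed
      also have "\<dots> = ennreal c * (\<integral>\<^sup>+a. ennreal (t (xs i) a) \<partial>M)"
        by (rule nn_integral_cmult) (use t_meas[OF y] in measurable)
      also have "\<dots> = ennreal c * ennreal (T (xs i))" unfolding t_int(2)[OF y Gy] T_def ..
      also have "\<dots> = ennreal (c * T (xs i))" using c_pos by (simp add: ennreal_mult')
      finally show ?thesis .
    qed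
    then show ?thesis
      by (intro arg_cong[where f="\<lambda>s. s / of_nat N"] sum.cong refl) auto
  qed
  also have "\<dots> = ennreal (real N) / ennreal (real N)"
    using cT c_pos T_nonneg by (simp add: sum_distrib_left[symmetric] ennreal_of_nat_eq_real_of_nat)
  also have "\<dots> = 1" using N by simp
  finally show "emeasure (density \<nu>0 (\<lambda>x. ennreal c * w x)) (space (density \<nu>0 (\<lambda>x. ennreal c * w x))) = 1"
    by simp
qed

lemma supp_ne: "hmm_supp M p0 tr lik k \<noteq> {}"
proof
  assume e: "hmm_supp M p0 tr lik k = {}"
  have "\<forall>x\<in>space S. G k x = 0"
  proof
    fix x assume x: "x \<in> space S"
    show "G k x = 0"
    proof (rule ccontr)
      assume "G k x \<noteq> 0"
      then have "G k x > 0" using gamma_nonneg[of k x] by simp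
      then have "hmm_post M p0 tr lik k x > 0" unfolding hmm_post_def using Z_pos[of k] by simp
      then have "x \<in> hmm_supp M p0 tr lik k" unfolding hmm_supp_def using x by simp
      then show False using e by simp
    qed
  qed
  note allz = this
  have "hmm_Z M p0 tr lik k = (\<integral>x. 0 \<partial>S)" unfolding hmm_Z_def
    by (rule Bochner_Integration.integral_cong[OF refl]) (use allz in auto)
  then show False using Z_pos[of k] by simp
qed

lemma supp_sub: "hmm_supp M p0 tr lik k \<subseteq> space S"
  unfolding hmm_supp_def by auto

lemma imh_inst: "imh S \<nu>0 w B0 c"
  by (rule imh.intro[OF nu_prob sets_ext w_meas w_le B0_pos c_pos pi_prob])

end

theorem proposition1:
  fixes M :: "'a measure"
    and p0 :: "'a \<Rightarrow> real" and tr :: "'a \<Rightarrow> 'a \<Rightarrow> real" and lik :: "nat \<Rightarrow> 'a \<Rightarrow> real"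
    and q0 :: "'a \<Rightarrow> real" and q :: "nat \<Rightarrow> (nat \<Rightarrow> 'a) \<Rightarrow> 'a \<Rightarrow> real"
    and k N :: nat and xs :: "nat \<Rightarrow> (nat \<Rightarrow> 'a)"
  assumes sf: "sigma_finite_measure M"
    and p0: "p0 \<in> borel_measurable M" "\<forall>a. p0 a \<ge> 0" "(\<integral>\<^sup>+a. ennreal (p0 a) \<partial>M) = 1"
    and tr: "(\<lambda>(u, v). tr u v) \<in> borel_measurable (M \<Otimes>\<^sub>M M)" "\<forall>u v. tr u v \<ge> 0"
            "\<forall>u\<in>space M. (\<integral>\<^sup>+v. ennreal (tr u v) \<partial>M) = 1"
    and lik: "\<forall>l. lik l \<in> borel_measurable M" "\<forall>l a. lik l a \<ge> 0"
    and Z: "\<forall>j. integrable (Ek M j) (hmm_gamma p0 tr lik j) \<and> hmm_Z M p0 tr lik j > 0"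
    and q0: "q0 \<in> borel_measurable M" "\<forall>a. q0 a \<ge> 0" "(\<integral>\<^sup>+a. ennreal (q0 a) \<partial>M) = 1"
    and q: "\<forall>j>0. (\<lambda>x. q j (restrict x {..<j}) (x j)) \<in> borel_measurable (Ek M j)"
           "\<forall>j y a. q j y a \<ge> 0"
           "\<forall>j>0. \<forall>y\<in>space (Ek M (j - 1)). (\<integral>\<^sup>+a. ennreal (q j y a) \<partial>M) = 1"
    and bounded: "\<forall>j. \<exists>B::real. \<forall>x\<in>hmm_supp M p0 tr lik j. smc_weight p0 tr lik q0 q j x \<le> ennreal B"
    and k: "k > 0"
    and N: "N > 0"
    and samples: "\<forall>i<N. xs i \<in> hmm_supp M p0 tr lik (k - 1)"
    and norm_pos: "(\<integral>y. hmm_pred M p0 tr lik k y \<partial>emp_measure (Ek M (k - 1)) N xs) > 0"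
  shows
    "let S = Ek M k;
         emp = emp_measure (Ek M (k - 1)) N xs;
         K = imh_kernel S (ext_prod M k emp (q k)) (smc_weight p0 tr lik q0 q k);
         target = density (ext_prod M k emp (hmm_cond M p0 tr lik k))
                    (\<lambda>x. ennreal (hmm_pred M p0 tr lik k (restrict x {..<k})
                                  / (\<integral>y. hmm_pred M p0 tr lik k y \<partial>emp)))
     in prob_space target \<and> sets target = sets S
        \<and> K \<in> S \<rightarrow>\<^sub>M prob_algebra S
        \<and> bind target K = target
        \<and> uniformly_ergodic S (hmm_supp M p0 tr lik k) K target"
proof -
  interpret H: hmm_setting M p0 tr lik q0 q k N xs
    by (rule hmm_setting.intro[OF sf p0 tr lik Z q0 q bounded k N samples norm_pos])
  interpret I: imh "Ek M k" "ext_prod M k (emp_measure (Ek M (k - 1)) N xs) (q k)"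
      "smc_weight p0 tr lik q0 q k" H.B0 H.c
    by (rule H.imh_inst)
  have te: "density (ext_prod M k (emp_measure (Ek M (k - 1)) N xs) (hmm_cond M p0 tr lik k))
                    (\<lambda>x. ennreal (hmm_pred M p0 tr lik k (restrict x {..<k})
                                  / (\<integral>y. hmm_pred M p0 tr lik k y \<partial>emp_measure (Ek M (k - 1)) N xs)))
      = density (ext_prod M k (emp_measure (Ek M (k - 1)) N xs) (q k)) (\<lambda>x. ennreal H.c * smc_weight p0 tr lik q0 q k x)"
    using H.target_eq unfolding H.cc_def .
  have sets_t: "sets (density (ext_prod M k (emp_measure (Ek M (k - 1)) N xs) (q k)) (\<lambda>x. ennreal H.c * smc_weight p0 tr lik q0 q k x)) = sets (Ek M k)"
    by (simp add: H.sets_ext)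
  show ?thesis
    unfolding Let_def te
    using I.pi_prob sets_t I.K_meas I.invariant I.ergodic[OF H.supp_sub H.supp_ne]
    by blast
qed

end
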